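(* The functionally independent Casimir invariants of the Lie algebra $\mathfrak{g}_{n}$ are the linear central elements $z_{i,j}$ ($1\leq i\leq j\leq n-2$) and the $n$th degree polynomial $C_{n}=-\det(M_n)$, where $M_n$ is the $n\times n$ symmetric matrix with coefficients in $\mathfrak{g}_n$ \begin{equation*} M_n:=\begin{pmatrix} z_{1,1} & \cdots & z_{1,n-2} & -y_{1,-} & y_{1,+} \\ \vdots & \ddots & \vdots & \vdots & \vdots \\ z_{1,n-2} & \cdots & z_{n-2,n-2} & -y_{n-2,-} & y_{n-2,+} \\ -y_{1,-} & \cdots & -y_{n-2,-} & -2x_{-} & h \\ y_{1,+} & \cdots & y_{n-2,+} & h & 2x_{+} \end{pmatrix}. \end{equation*}
   Context: For $n\geq 2$, $\mathfrak{g}_n$ is the $n(n+1)/2$-dimensional Lie algebra over $\mathbb{K}$ ($\mathbb{R}$ or $\mathbb{C}$) with basis $h,x_-,x_+$, $y_{i,\pm}$ ($i=1,\dots,n-2$), $z_{i,j}$ ($1\le i\le j\le n-2$), and commutation relations $[x_+,x_-]=h$, $[h,x_\pm]=\pm 2x_\pm$, $[h,y_{i,\pm}]=\pm y_{i,\pm}$, $[x_-,y_{i,-}]=[x_+,y_{i,+}]=0$, $[x_-,y_{i,+}]=y_{i,-}$, $[x_+,y_{i,-}]=y_{i,+}$, $[y_{i,+},y_{j,+}]=[y_{i,-},y_{j,-}]=0$, $[y_{i,+},y_{j,-}]=z_{\min(i,j),\max(i,j)}$, and the $z_{i,j}$ are central. A (polynomial) Casimir element is an element $C$ of the symmetric algebra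 $S\mathfrak{g}_n\cong\mathbb{K}[h,x_-,x_+,\dots,z_{n-2,n-2}]$ (with the Lie–Poisson bracket induced by the Lie bracket) annihilated by the adjoint action of $\mathfrak{g}_n$ extended by derivations, i.e. $\{C,x\}=0$ for all $x\in\mathfrak{g}_n$. It was shown earlier (via the Beltrametti–Blasi formula) that $\mathfrak{g}_n$ has exactly $n(n-1)/2\cdot$—more precisely $(n-1)(n-2)/2+1$—functionally independent Casimir invariants, of which $(n-1)(n-2)/2$ are the central elements $z_{i,j}$. *)

theory Defs
  imports "HOL-Library.Poly_Mapping" "HOL-Combinatorics.Permutations"
begin

datatype gvar = H | Xm | Xp | Ym nat | Yp nat | Z nat nat

definition gbasis :: "nat \<Rightarrow> gvar set" where
  "gbasis n = {H, Xm, Xp} \<union> Ym ` {1..n-2} \<union> Yp ` {1..n-2}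
      \<union> {Z i j | i j. 1 \<le> i \<and> i \<le> j \<and> j \<le> n-2}"

text \<open>Symmetric algebra S g = commutative polynomial ring in the basis elements
  (polynomials as finitely supported maps from monomials to coefficients).\<close>
type_synonym 'a spoly = "(gvar \<Rightarrow>\<^sub>0 nat) \<Rightarrow>\<^sub>0 'a"

definition var :: "gvar \<Rightarrow> 'a::comm_ring_1 spoly" where
  "var v = Poly_Mapping.single (Poly_Mapping.single v 1) 1"

definition pd :: "gvar \<Rightarrow> 'a::comm_ring_1 spoly \<Rightarrow> 'a spoly" where
  "pd a p = (\<Sum>m\<in>Poly_Mapping.keys p. Poly_Mapping.single (m - Poly_Mapping.single a (1::nat))
                 (Poly_Mapping.lookup p m * of_nat (Poly_Mapping.lookup (m :: gvar \<Rightarrow>\<^sub>0 nat) a)))"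

text \<open>Evaluation of a polynomial at a point (a linear functional on g).\<close>
definition peval :: "(gvar \<Rightarrow> 'a::comm_ring_1) \<Rightarrow> 'a spoly \<Rightarrow> 'a" where
  "peval \<xi> p = (\<Sum>m\<in>Poly_Mapping.keys p. Poly_Mapping.lookup p m * (\<Prod>v\<in>Poly_Mapping.keys m. \<xi> v ^ Poly_Mapping.lookup m v))"

text \<open>Lie bracket of basis elements (valid indices assumed), as linear elements of S g.\<close>
fun brk :: "gvar \<Rightarrow> gvar \<Rightarrow> 'a::comm_ring_1 spoly" where
  "brk Xp Xm = var H"
| "brk Xm Xp = - var H"
| "brk H Xp = 2 * var Xp"
| "brk Xp H = - (2 * var Xp)"
| "brk H Xm = - (2 * var Xm)"
| "brk Xm H = 2 * var Xm"
| "brk H (Yp i) = var (Yp i)"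
| "brk (Yp i) H = - var (Yp i)"
| "brk H (Ym i) = - var (Ym i)"
| "brk (Ym i) H = var (Ym i)"
| "brk Xm (Yp i) = var (Ym i)"
| "brk (Yp i) Xm = - var (Ym i)"
| "brk Xp (Ym i) = var (Yp i)"
| "brk (Ym i) Xp = - var (Yp i)"
| "brk (Yp i) (Ym j) = var (Z (min i j) (max i j))"
| "brk (Ym j) (Yp i) = - var (Z (min i j) (max i j))"
| "brk _ _ = 0"

definition pb :: "nat \<Rightarrow> 'a::comm_ring_1 spoly \<Rightarrow> 'a spoly \<Rightarrow> 'a spoly" where
  "pb n f g = (\<Sum>a\<in>gbasis n. \<Sum>b\<in>gbasis n. brk a b * pd a f * pd b g)"

definition casimir :: "nat \<Rightarrow> 'a::comm_ring_1 spoly \<Rightarrow> bool" where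
  "casimir n C \<longleftrightarrow> (\<forall>m\<in>Poly_Mapping.keys C. Poly_Mapping.keys m \<subseteq> gbasis n) \<and> (\<forall>x\<in>gbasis n. pb n C (var x) = 0)"

definition grad_indep_at :: "nat \<Rightarrow> 'a::comm_ring_1 spoly list \<Rightarrow> (gvar \<Rightarrow> 'a) \<Rightarrow> bool" where
  "grad_indep_at n Fs \<xi> \<longleftrightarrow>
     (\<forall>c::nat \<Rightarrow> 'a. (\<forall>a\<in>gbasis n. (\<Sum>k<length Fs. c k * peval \<xi> (pd a (Fs ! k))) = 0)
          \<longrightarrow> (\<forall>k<length Fs. c k = 0))"

text \<open>Functional independence: the Jacobian has full rank at some (hence generic) point.\<close>
definition functionally_independent :: "nat \<Rightarrow> 'a::comm_ring_1 spoly list \<Rightarrow> bool" where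
  "functionally_independent n Fs \<longleftrightarrow> (\<exists>\<xi>. grad_indep_at n Fs \<xi>)"

text \<open>The matrix M_n (0-based indices; rows/columns 0..n-3 correspond to 1..n-2,
  row/column n-2 to x_-, row/column n-1 to x_+).\<close>
definition Mmat :: "nat \<Rightarrow> nat \<Rightarrow> nat \<Rightarrow> 'a::comm_ring_1 spoly" where
  "Mmat n r c =
    (if r < n-2 \<and> c < n-2 then var (Z (min r c + 1) (max r c + 1))
     else if r < n-2 \<and> c = n-2 then - var (Ym (r+1))
     else if r < n-2 \<and> c = n-1 then var (Yp (r+1))
     else if c < n-2 \<and> r = n-2 then - var (Ym (c+1))
     else if c < n-2 \<and> r = n-1 then var (Yp (c+1))
     else if r = n-2 \<and> c = n-2 then - (2 * var Xm)
     else if r = n-1 \<and> c = n-1 then 2 * var Xp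
     else var H)"

definition detn :: "nat \<Rightarrow> (nat \<Rightarrow> nat \<Rightarrow> 'a::comm_ring_1) \<Rightarrow> 'a" where
  "detn n M = (\<Sum>p\<in>{p. p permutes {..<n}}. of_int (sign p) * (\<Prod>i<n. M i (p i)))"

definition Cn :: "nat \<Rightarrow> 'a::comm_ring_1 spoly" where
  "Cn n = - detn n (Mmat n)"

definition zpairs :: "nat \<Rightarrow> (nat \<times> nat) list" where
  "zpairs n = [(i, j). i \<leftarrow> [1..<n-1], j \<leftarrow> [i..<n-1]]"

definition invariants :: "nat \<Rightarrow> 'a::comm_ring_1 spoly list" where
  "invariants n = Cn n # map (\<lambda>(i, j). var (Z i j)) (zpairs n)"

end

theory Submission
  imports Defs "Jordan_Normal_Form.Determinant" "HOL-Library.Nat_Bijection"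
begin

definition lin_ext :: "((gvar \<Rightarrow>\<^sub>0 nat) \<Rightarrow> 'a::comm_ring_1 \<Rightarrow> 'b::ab_group_add) \<Rightarrow> 'a spoly \<Rightarrow> 'b" where
  "lin_ext f p = (\<Sum>m\<in>Poly_Mapping.keys p. f m (Poly_Mapping.lookup p m))"

definition linf :: "((gvar \<Rightarrow>\<^sub>0 nat) \<Rightarrow> 'a::comm_ring_1 \<Rightarrow> 'b::ab_group_add) \<Rightarrow> bool" where
  "linf f \<longleftrightarrow> (\<forall>m. f m 0 = 0) \<and> (\<forall>m a b. f m (a + b) = f m a + f m b)"

lemma lin_ext_superset:
  assumes "linf f" "finite S" "Poly_Mapping.keys p \<subseteq> S"
  shows "lin_ext f p = (\<Sum>m\<in>S. f m (Poly_Mapping.lookup p m))"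
  unfolding lin_ext_def
  by (rule sum.mono_neutral_left) (use assms in \<open>auto simp: linf_def in_keys_iff\<close>)

lemma lin_ext_add:
  assumes "linf f"
  shows "lin_ext f (p + q) = lin_ext f p + lin_ext f q"
proof -
  let ?S = "Poly_Mapping.keys p \<union> Poly_Mapping.keys q"
  have "lin_ext f (p + q) = (\<Sum>m\<in>?S. f m (Poly_Mapping.lookup (p+q) m))"
    using keys_add[of p q] by (intro lin_ext_superset[OF assms]) auto
  also have "\<dots> = (\<Sum>m\<in>?S. f m (Poly_Mapping.lookup p m)) + (\<Sum>m\<in>?S. f m (Poly_Mapping.lookup q m))"
    using assms by (simp add: lookup_add linf_def sum.distrib)
  also have "\<dots> = lin_ext f p + lin_ext f q"
    by (subst (1 2) lin_ext_superset[OF assms]) auto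
  finally show ?thesis .
qed

lemma lin_ext_zero: "lin_ext f 0 = 0"
  by (simp add: lin_ext_def)

lemma lin_ext_sum:
  assumes "linf f"
  shows "lin_ext f (sum g A) = (\<Sum>i\<in>A. lin_ext f (g i))"
  by (induction A rule: infinite_finite_induct) (auto simp: lin_ext_zero lin_ext_add[OF assms])

lemma lin_ext_single:
  assumes "linf f"
  shows "lin_ext f (Poly_Mapping.single m c) = f m c"
  using assms by (auto simp: lin_ext_def linf_def)

lemma linf_neg:
  assumes "linf f" shows "f m (- a) = - f m a"
proof -
  have "f m (a + - a) = f m a + f m (- a)" using assms by (simp only: linf_def)
  moreover have "f m (a + - a) = 0" using assms by (simp add: linf_def)
  ultimately have "0 = f m a + f m (- a)" by simp
  then show ?thesis by (simp add: eq_neg_iff_add_eq_0 add.commute)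
qed

lemma lin_ext_uminus:
  assumes "linf f"
  shows "lin_ext f (- p) = - lin_ext f p"
  unfolding lin_ext_def by (simp add: keys_minus linf_neg[OF assms] sum_negf)

lemma lin_ext_diff:
  assumes "linf f"
  shows "lin_ext f (p - q) = lin_ext f p - lin_ext f q"
  using lin_ext_add[OF assms, of p "-q"] lin_ext_uminus[OF assms, of q] by simp

lemma poly_expand:
  "(p :: 'a::comm_ring_1 spoly) = (\<Sum>m\<in>Poly_Mapping.keys p. Poly_Mapping.single m (Poly_Mapping.lookup p m))"
proof (rule poly_mapping_eqI)
  fix k
  show "Poly_Mapping.lookup p k = Poly_Mapping.lookup (\<Sum>m\<in>Poly_Mapping.keys p. Poly_Mapping.single m (Poly_Mapping.lookup p m)) k"
    by (simp add: lookup_sum lookup_single when_def in_keys_iff)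
qed

lemma lin_ext_mult:
  assumes "linf f" "linf g" "linf h"
    and single: "\<And>m m' c c'. h (m + m') (c * c') = f m c * g m' c' "
  shows "lin_ext h (p * q) = lin_ext f p * (lin_ext g q :: 'b::comm_ring_1)"
proof -
  have "p * q = (\<Sum>m\<in>Poly_Mapping.keys p. Poly_Mapping.single m (Poly_Mapping.lookup p m)) *
        (\<Sum>m\<in>Poly_Mapping.keys q. Poly_Mapping.single m (Poly_Mapping.lookup q m))"
    by (subst (1) poly_expand, subst (2) poly_expand) (rule refl)
  also have "\<dots> = (\<Sum>m\<in>Poly_Mapping.keys p. \<Sum>m'\<in>Poly_Mapping.keys q.
        Poly_Mapping.single (m + m') (Poly_Mapping.lookup p m * Poly_Mapping.lookup q m'))"
    by (simp add: sum_product mult_single)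
  finally have "lin_ext h (p * q) = (\<Sum>m\<in>Poly_Mapping.keys p. \<Sum>m'\<in>Poly_Mapping.keys q.
        f m (Poly_Mapping.lookup p m) * g m' (Poly_Mapping.lookup q m'))"
    by (simp add: lin_ext_sum[OF assms(3)] lin_ext_single[OF assms(3)] single)
  also have "\<dots> = lin_ext f p * lin_ext g q"
    by (simp add: lin_ext_def sum_product)
  finally show ?thesis .
qed

subsection \<open>Partial derivatives\<close>

definition pdf :: "gvar \<Rightarrow> (gvar \<Rightarrow>\<^sub>0 nat) \<Rightarrow> 'a::comm_ring_1 \<Rightarrow> 'a spoly" where
  "pdf a m c = Poly_Mapping.single (m - Poly_Mapping.single a 1) (c * of_nat (Poly_Mapping.lookup m a))"

lemma linf_pdf: "linf (pdf a)"
  by (simp add: linf_def pdf_def distrib_right single_add)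

lemma pd_lin: "pd a p = lin_ext (pdf a) p"
  by (simp add: pd_def lin_ext_def pdf_def)

lemma pd_single: "pd a (Poly_Mapping.single m c) = Poly_Mapping.single (m - Poly_Mapping.single a 1) (c * of_nat (Poly_Mapping.lookup m a))"
  by (simp add: pd_lin lin_ext_single linf_pdf pdf_def)

lemma pd_add: "pd a (p + q) = pd a p + pd a q"
  by (simp add: pd_lin lin_ext_add linf_pdf)

lemma pd_uminus: "pd a (- p) = - pd a p"
  by (simp add: pd_lin lin_ext_uminus linf_pdf)

lemma pd_diff: "pd a (p - q) = pd a p - pd a q"
  by (simp add: pd_lin lin_ext_diff linf_pdf)

lemma pd_sum: "pd a (sum g A) = (\<Sum>i\<in>A. pd a (g i))"
  by (simp add: pd_lin lin_ext_sum linf_pdf)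

lemma pd_zero: "pd a 0 = 0"
  by (simp add: pd_lin lin_ext_zero)

lemma pd_single_mult:
  "pd a (Poly_Mapping.single m c * Poly_Mapping.single m' c') =
     pd a (Poly_Mapping.single m c) * Poly_Mapping.single m' c' + Poly_Mapping.single m c * pd a (Poly_Mapping.single m' c')"
proof -
  let ?d = "Poly_Mapping.single a (1::nat)"
  have l: "\<And>m k. Poly_Mapping.lookup (m - ?d) k = Poly_Mapping.lookup m k - (if a = k then 1 else 0)"
    by (simp add: lookup_minus lookup_single when_def)
  show ?thesis
  proof (cases "Poly_Mapping.lookup m a = 0")
    case True
    note T = this
    show ?thesis
    proof (cases "Poly_Mapping.lookup m' a = 0")
      case True
      then show ?thesis using T by (simp add: pd_single mult_single lookup_add)
    next
      case False
      have "m + m' - ?d = m + (m' - ?d)"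
        using False by (intro poly_mapping_eqI) (auto simp: lookup_minus lookup_add lookup_single when_def)
      then show ?thesis using T by (simp add: pd_single mult_single lookup_add algebra_simps)
    qed
  next
    case False
    note F = this
    have e1: "m + m' - ?d = m - ?d + m'"
      using F by (intro poly_mapping_eqI) (auto simp: lookup_minus lookup_add lookup_single when_def)
    show ?thesis
    proof (cases "Poly_Mapping.lookup m' a = 0")
      case True
      then show ?thesis using e1 by (simp add: pd_single mult_single lookup_add algebra_simps)
    next
      case False
      have "m + m' - ?d = m + (m' - ?d)"
        using False by (intro poly_mapping_eqI) (auto simp: lookup_minus lookup_add lookup_single when_def)
      then show ?thesis using e1
        by (simp add: pd_single mult_single lookup_add algebra_simps single_add[symmetric])
    qed
  qed
qed

lemma pd_mult: "pd a (p * q) = pd a p * q + p * pd a (q :: 'a::comm_ring_1 spoly)"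
proof -
  let ?P = "\<lambda>m. Poly_Mapping.single m (Poly_Mapping.lookup p m)"
  let ?Q = "\<lambda>m. Poly_Mapping.single m (Poly_Mapping.lookup q m)"
  have ep: "p = (\<Sum>m\<in>Poly_Mapping.keys p. ?P m)" by (rule poly_expand)
  have eq: "q = (\<Sum>m\<in>Poly_Mapping.keys q. ?Q m)" by (rule poly_expand)
  have "pd a (p * q) = pd a ((\<Sum>m\<in>Poly_Mapping.keys p. ?P m) * (\<Sum>m\<in>Poly_Mapping.keys q. ?Q m))"
    using ep eq by simp
  also have "\<dots> = (\<Sum>m\<in>Poly_Mapping.keys p. \<Sum>m'\<in>Poly_Mapping.keys q. pd a (?P m * ?Q m'))"
    by (simp add: sum_product pd_sum)
  also have "\<dots> = (\<Sum>m\<in>Poly_Mapping.keys p. \<Sum>m'\<in>Poly_Mapping.keys q. pd a (?P m) * ?Q m' + ?P m * pd a (?Q m'))"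
    by (simp add: pd_single_mult)
  also have "\<dots> = (\<Sum>m\<in>Poly_Mapping.keys p. pd a (?P m)) * (\<Sum>m\<in>Poly_Mapping.keys q. ?Q m)
       + (\<Sum>m\<in>Poly_Mapping.keys p. ?P m) * (\<Sum>m\<in>Poly_Mapping.keys q. pd a (?Q m))"
    by (simp add: sum_product sum.distrib)
  also have "\<dots> = pd a p * q + p * pd a q"
    using ep eq by (simp add: pd_sum[symmetric])
  finally show ?thesis .
qed

lemma pd_const: "pd a (Poly_Mapping.single 0 c) = 0"
  by (simp add: pd_single)

lemma pd_one: "pd a (1 :: 'a::comm_ring_1 spoly) = 0"
  using pd_const[of a "1::'a"] by (simp add: single_one)

lemma pd_numeral: "pd a (numeral k :: 'a::comm_ring_1 spoly) = 0"
  using pd_const[of a "numeral k::'a"] by simp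

lemma pd_of_int: "pd a (of_int k :: 'a::comm_ring_1 spoly) = 0"
  using pd_const[of a "of_int k::'a"] by simp

lemma pd_var: "pd a (var v :: 'a::comm_ring_1 spoly) = (if a = v then 1 else 0)"
  by (auto simp: var_def pd_single lookup_single)

lemma pd_prod: "pd a (prod f I) = (\<Sum>k\<in>I. pd a (f k) * prod f (I - {k}))"
proof (induction I rule: infinite_finite_induct)
  case (infinite A) then show ?case by (simp add: pd_one)
next
  case empty then show ?case by (simp add: pd_one)
next
  case (insert x F)
  have "pd a (prod f (insert x F)) = pd a (f x) * prod f F + f x * pd a (prod f F)"
    using insert by (simp add: pd_mult)
  also have "f x * pd a (prod f F) = (\<Sum>k\<in>F. pd a (f k) * (f x * prod f (F - {k})))"
    using insert by (simp add: sum_distrib_left algebra_simps)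
  also have "\<dots> = (\<Sum>k\<in>F. pd a (f k) * prod f (insert x F - {k}))"
    using insert by (intro sum.cong refl) (auto simp: insert_Diff_if prod.insert_remove)
  finally show ?case using insert by (simp add: insert_Diff_if)
qed

subsection \<open>Evaluation\<close>

definition mon :: "(gvar \<Rightarrow> 'a::comm_ring_1) \<Rightarrow> (gvar \<Rightarrow>\<^sub>0 nat) \<Rightarrow> 'a" where
  "mon \<xi> m = (\<Prod>v\<in>Poly_Mapping.keys m. \<xi> v ^ Poly_Mapping.lookup m v)"

lemma mon_superset: "finite T \<Longrightarrow> Poly_Mapping.keys m \<subseteq> T \<Longrightarrow> mon \<xi> m = (\<Prod>v\<in>T. \<xi> v ^ Poly_Mapping.lookup m v)"
  unfolding mon_def by (rule prod.mono_neutral_left) (auto simp: in_keys_iff)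

lemma mon_add: "mon \<xi> (m + m') = mon \<xi> m * mon \<xi> m'"
proof -
  let ?T = "Poly_Mapping.keys m \<union> Poly_Mapping.keys m'"
  have "mon \<xi> (m + m') = (\<Prod>v\<in>?T. \<xi> v ^ Poly_Mapping.lookup (m + m') v)"
    using keys_add[of m m'] by (intro mon_superset) auto
  also have "\<dots> = (\<Prod>v\<in>?T. \<xi> v ^ Poly_Mapping.lookup m v) * (\<Prod>v\<in>?T. \<xi> v ^ Poly_Mapping.lookup m' v)"
    by (simp add: lookup_add power_add prod.distrib)
  also have "\<dots> = mon \<xi> m * mon \<xi> m'"
    by (subst (1 2) mon_superset) auto
  finally show ?thesis .
qed

lemma mon_zero: "mon \<xi> 0 = 1" by (simp add: mon_def)

definition pevf :: "(gvar \<Rightarrow> 'a::comm_ring_1) \<Rightarrow> (gvar \<Rightarrow>\<^sub>0 nat) \<Rightarrow> 'a \<Rightarrow> 'a" where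
  "pevf \<xi> m c = c * mon \<xi> m"

lemma linf_pevf: "linf (pevf \<xi>)"
  by (simp add: linf_def pevf_def distrib_right)

lemma peval_lin: "peval \<xi> p = lin_ext (pevf \<xi>) p"
  by (simp add: peval_def lin_ext_def pevf_def mon_def)

lemma peval_single: "peval \<xi> (Poly_Mapping.single m c) = c * mon \<xi> m"
  by (simp add: peval_lin lin_ext_single linf_pevf pevf_def)

lemma peval_add: "peval \<xi> (p + q) = peval \<xi> p + peval \<xi> q"
  by (simp add: peval_lin lin_ext_add linf_pevf)

lemma peval_mult: "peval \<xi> (p * q) = peval \<xi> p * peval \<xi> q"
  unfolding peval_lin
  by (rule lin_ext_mult[OF linf_pevf linf_pevf linf_pevf]) (simp add: pevf_def mon_add)

lemma peval_one: "peval \<xi> 1 = 1"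
  using peval_single[of \<xi> 0 1] by (simp add: single_one mon_zero)

lemma peval_zero: "peval \<xi> 0 = 0"
  by (simp add: peval_lin lin_ext_zero)

interpretation peval_hom: comm_ring_hom "peval \<xi>"
  by unfold_locales (simp_all add: peval_zero peval_one peval_add peval_mult)

lemma peval_var: "peval \<xi> (var v) = \<xi> v"
  by (simp add: var_def peval_single mon_def)

lemma pd_signof_mult: "pd a (signof p * x) = signof p * pd a (x :: 'a::comm_ring_1 spoly)"
  by (simp add: pd_mult pd_of_int)

lemma pd_det:
  fixes A :: "'a::comm_ring_1 spoly mat"
  assumes A: "A \<in> carrier_mat n n"
  shows "pd a (det A) = (\<Sum>i<n. \<Sum>j<n. pd a (A $$ (i,j)) * cofactor A i j)"
proof -
  define B where "B k = mat n n (\<lambda>(i,j). if i = k then pd a (A $$ (i,j)) else A $$ (i,j))" for k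
  have B: "B k \<in> carrier_mat n n" for k by (simp add: B_def)
  have "pd a (det A) = (\<Sum>p\<in>{p. p permutes {0..<n}}. signof p *
      (\<Sum>k\<in>{0..<n}. pd a (A $$ (k, p k)) * (\<Prod>i\<in>{0..<n} - {k}. A $$ (i, p i))))"
    by (simp add: det_def'[OF A] pd_sum pd_signof_mult pd_prod)
  also have "\<dots> = (\<Sum>k\<in>{0..<n}. \<Sum>p\<in>{p. p permutes {0..<n}}. signof p * (\<Prod>i\<in>{0..<n}. B k $$ (i, p i)))"
  proof -
    have "signof p * (\<Sum>k\<in>{0..<n}. pd a (A $$ (k, p k)) * (\<Prod>i\<in>{0..<n} - {k}. A $$ (i, p i)))
        = (\<Sum>k\<in>{0..<n}. signof p * (\<Prod>i\<in>{0..<n}. B k $$ (i, p i)))" if p: "p permutes {0..<n}" for p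
    proof -
      have pk: "i < n \<Longrightarrow> p i < n" for i using p by (simp add: permutes_in_image)
      have "(\<Prod>i\<in>{0..<n}. B k $$ (i, p i)) = pd a (A $$ (k, p k)) * (\<Prod>i\<in>{0..<n} - {k}. A $$ (i, p i))"
        if k: "k < n" for k
      proof -
        have "(\<Prod>i\<in>{0..<n}. B k $$ (i, p i)) = B k $$ (k, p k) * (\<Prod>i\<in>{0..<n} - {k}. B k $$ (i, p i))"
          using k by (intro prod.remove) auto
        also have "(\<Prod>i\<in>{0..<n} - {k}. B k $$ (i, p i)) = (\<Prod>i\<in>{0..<n} - {k}. A $$ (i, p i))"
          by (intro prod.cong refl) (auto simp: B_def pk)
        finally show ?thesis using k by (simp add: B_def pk)
      qed
      then show ?thesis by (simp add: sum_distrib_left)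
    qed
    then show ?thesis by (simp add: sum.swap[of _ "{0..<n}"])
  qed
  also have "\<dots> = (\<Sum>k\<in>{0..<n}. det (B k))"
    by (simp add: det_def'[OF B])
  also have "\<dots> = (\<Sum>k<n. \<Sum>j<n. pd a (A $$ (k,j)) * cofactor A k j)"
  proof -
    have "det (B k) = (\<Sum>j<n. pd a (A $$ (k,j)) * cofactor A k j)" if k: "k < n" for k
    proof -
      have "det (B k) = (\<Sum>j<n. B k $$ (k,j) * cofactor (B k) k j)"
        by (rule laplace_expansion_row[OF B k])
      also have "\<dots> = (\<Sum>j<n. pd a (A $$ (k,j)) * cofactor A k j)"
      proof (intro sum.cong refl)
        fix j assume j: "j \<in> {..<n}"
        have "mat_delete (B k) k j = mat_delete A k j"
          using A by (intro eq_matI) (auto simp: mat_delete_def B_def)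
        then show "B k $$ (k,j) * cofactor (B k) k j = pd a (A $$ (k,j)) * cofactor A k j"
          using j k by (simp add: cofactor_def B_def)
      qed
      finally show ?thesis .
    qed
    then show ?thesis by (simp add: atLeast0LessThan)
  qed
  finally show ?thesis .
qed

lemma finite_gbasis: "finite (gbasis n)"
proof -
  have "{Z i j | i j. 1 \<le> i \<and> i \<le> j \<and> j \<le> n-2} \<subseteq> (\<lambda>(i,j). Z i j) ` ({..n} \<times> {..n})"
    by auto
  then have "finite {Z i j | i j. 1 \<le> i \<and> i \<le> j \<and> j \<le> n-2}"
    by (rule finite_subset) auto
  then show ?thesis by (simp add: gbasis_def)
qed

definition Dx :: "nat \<Rightarrow> gvar \<Rightarrow> 'a::comm_ring_1 spoly \<Rightarrow> 'a spoly" where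
  "Dx n x f = (\<Sum>a\<in>gbasis n. brk a x * pd a f)"

lemma pb_var: "x \<in> gbasis n \<Longrightarrow> pb n f (var x) = Dx n x f"
  unfolding pb_def Dx_def
  by (intro sum.cong refl) (simp add: pd_var finite_gbasis if_distrib cong: if_cong)

lemma Dx_add: "Dx n x (f + g) = Dx n x f + Dx n x g"
  by (simp add: Dx_def pd_add distrib_left sum.distrib)

lemma Dx_uminus: "Dx n x (- f) = - Dx n x f"
  by (simp add: Dx_def pd_uminus sum_negf)

lemma Dx_two: "Dx n x (2 * f) = 2 * Dx n x f"
  by (simp add: Dx_def pd_mult pd_numeral sum_distrib_left algebra_simps)

lemma Dx_var: "v \<in> gbasis n \<Longrightarrow> Dx n x (var v) = brk v x"
  by (simp add: Dx_def pd_var finite_gbasis if_distrib cong: if_cong)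

lemma swap3: "(\<Sum>a\<in>G. \<Sum>i\<in>I. \<Sum>j\<in>J. f a i j) = (\<Sum>i\<in>I. \<Sum>j\<in>J. \<Sum>a\<in>G. f a i j)"
proof -
  have "(\<Sum>a\<in>G. \<Sum>i\<in>I. \<Sum>j\<in>J. f a i j) = (\<Sum>i\<in>I. \<Sum>a\<in>G. \<Sum>j\<in>J. f a i j)"
    by (rule sum.swap)
  also have "\<dots> = (\<Sum>i\<in>I. \<Sum>j\<in>J. \<Sum>a\<in>G. f a i j)"
    by (rule sum.cong[OF refl]) (rule sum.swap)
  finally show ?thesis .
qed

lemma swap_inner: "(\<Sum>i\<in>I. \<Sum>j\<in>J. \<Sum>l\<in>L. f i j l) = (\<Sum>i\<in>I. \<Sum>l\<in>L. \<Sum>j\<in>J. f i j l)"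
  by (rule sum.cong[OF refl]) (rule sum.swap)

lemma Dx_det:
  fixes A :: "'a::comm_ring_1 spoly mat"
  assumes A: "A \<in> carrier_mat n n"
  shows "Dx N x (det A) = (\<Sum>i<n. \<Sum>j<n. Dx N x (A $$ (i,j)) * cofactor A i j)"
proof -
  have "Dx N x (det A) = (\<Sum>a\<in>gbasis N. \<Sum>i<n. \<Sum>j<n. brk a x * pd a (A $$ (i,j)) * cofactor A i j)"
    unfolding Dx_def pd_det[OF A] by (simp add: sum_distrib_left mult.assoc)
  also have "\<dots> = (\<Sum>i<n. \<Sum>j<n. \<Sum>a\<in>gbasis N. brk a x * pd a (A $$ (i,j)) * cofactor A i j)"
    by (rule swap3)
  also have "\<dots> = (\<Sum>i<n. \<Sum>j<n. Dx N x (A $$ (i,j)) * cofactor A i j)"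
    unfolding Dx_def by (simp add: sum_distrib_right)
  finally show ?thesis .
qed

lemma adj_row:
  fixes A :: "'a::comm_ring_1 mat"
  assumes A: "A \<in> carrier_mat n n" and l: "l < n" and i: "i < n"
  shows "(\<Sum>j<n. A $$ (l,j) * cofactor A i j) = (if l = i then det A else 0)"
proof -
  have "(A * adj_mat A) $$ (l,i) = (det A \<cdot>\<^sub>m 1\<^sub>m n) $$ (l,i)" using adj_mat(2)[OF A] by simp
  moreover have "(A * adj_mat A) $$ (l,i) = (\<Sum>j<n. A $$ (l,j) * cofactor A i j)"
    using A l i by (simp add: adj_mat_def scalar_prod_def atLeast0LessThan)
  ultimately show ?thesis using l i by simp
qed

lemma adj_col:
  fixes A :: "'a::comm_ring_1 mat"
  assumes A: "A \<in> carrier_mat n n" and l: "l < n" and j: "j < n"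
  shows "(\<Sum>i<n. cofactor A i j * A $$ (i,l)) = (if j = l then det A else 0)"
proof -
  have "(adj_mat A * A) $$ (j,l) = (det A \<cdot>\<^sub>m 1\<^sub>m n) $$ (j,l)" using adj_mat(3)[OF A] by simp
  moreover have "(adj_mat A * A) $$ (j,l) = (\<Sum>i<n. cofactor A i j * A $$ (i,l))"
    using A l j by (simp add: adj_mat_def scalar_prod_def atLeast0LessThan)
  ultimately show ?thesis using l j by simp
qed

lemma trace_lemma:
  fixes A :: "'a::comm_ring_1 mat"
  assumes A: "A \<in> carrier_mat n n"
    and D: "\<And>i j. i < n \<Longrightarrow> j < n \<Longrightarrow> D i j = (\<Sum>l<n. K i l * A $$ (l,j)) + (\<Sum>l<n. A $$ (i,l) * K j l)"
  shows "(\<Sum>i<n. \<Sum>j<n. D i j * cofactor A i j) = 2 * (\<Sum>i<n. K i i) * det A"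
proof -
  have "(\<Sum>i<n. \<Sum>j<n. D i j * cofactor A i j) =
     (\<Sum>i<n. \<Sum>j<n. (\<Sum>l<n. K i l * A $$ (l,j)) * cofactor A i j) +
     (\<Sum>i<n. \<Sum>j<n. (\<Sum>l<n. A $$ (i,l) * K j l) * cofactor A i j)"
    by (simp add: D distrib_right sum.distrib)
  also have "(\<Sum>i<n. \<Sum>j<n. (\<Sum>l<n. K i l * A $$ (l,j)) * cofactor A i j) =
      (\<Sum>i<n. \<Sum>j<n. \<Sum>l<n. K i l * (A $$ (l,j) * cofactor A i j))"
    by (simp add: sum_distrib_right mult.assoc)
  also have "\<dots> = (\<Sum>i<n. \<Sum>l<n. \<Sum>j<n. K i l * (A $$ (l,j) * cofactor A i j))"
    by (rule swap_inner)
  also have "\<dots> = (\<Sum>i<n. \<Sum>l<n. K i l * (\<Sum>j<n. A $$ (l,j) * cofactor A i j))"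
    by (simp add: sum_distrib_left)
  also have "\<dots> = (\<Sum>i<n. K i i * det A)"
    by (intro sum.cong refl) (simp add: adj_row[OF A] if_distrib cong: if_cong)
  also have "(\<Sum>i<n. \<Sum>j<n. (\<Sum>l<n. A $$ (i,l) * K j l) * cofactor A i j) =
      (\<Sum>i<n. \<Sum>j<n. \<Sum>l<n. K j l * (cofactor A i j * A $$ (i,l)))"
    by (simp add: sum_distrib_left sum_distrib_right mult_ac)
  also have "\<dots> = (\<Sum>j<n. \<Sum>i<n. \<Sum>l<n. K j l * (cofactor A i j * A $$ (i,l)))"
    by (rule sum.swap)
  also have "\<dots> = (\<Sum>j<n. \<Sum>l<n. \<Sum>i<n. K j l * (cofactor A i j * A $$ (i,l)))"
    by (rule swap_inner)
  also have "\<dots> = (\<Sum>j<n. \<Sum>l<n. K j l * (\<Sum>i<n. cofactor A i j * A $$ (i,l)))"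
    by (simp add: sum_distrib_left)
  also have "\<dots> = (\<Sum>j<n. K j j * det A)"
    by (intro sum.cong refl) (simp add: adj_col[OF A] if_distrib cong: if_cong)
  finally show ?thesis by (simp add: sum_distrib_right sum_distrib_left algebra_simps)
qed

subsection \<open>The matrix\<close>

definition Mn :: "nat \<Rightarrow> 'a::comm_ring_1 spoly mat" where
  "Mn n = mat n n (\<lambda>(i,j). Mmat n i j)"

lemma Mn_carrier: "Mn n \<in> carrier_mat n n" by (simp add: Mn_def)

lemma Mn_index: "i < n \<Longrightarrow> j < n \<Longrightarrow> Mn n $$ (i,j) = Mmat n i j" by (simp add: Mn_def)

lemma detn_det: "detn n f = det (mat n n (\<lambda>(i,j). f i j))"
proof -
  have "det (mat n n (\<lambda>(i,j). f i j)) = (\<Sum>p\<in>{p. p permutes {0..<n}}. signof p * (\<Prod>i = 0..<n. f i (p i)))"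
    by (subst det_def'[of _ n]) (auto intro!: sum.cong prod.cong simp: permutes_in_image)
  then show ?thesis by (simp add: detn_def atLeast0LessThan)
qed

lemma Cn_det: "Cn n = - det (Mn n)"
  by (simp add: Cn_def detn_det Mn_def)

lemma gb_H[simp]: "H \<in> gbasis n" and gb_Xm[simp]: "Xm \<in> gbasis n" and gb_Xp[simp]: "Xp \<in> gbasis n"
  by (auto simp: gbasis_def)

lemma gb_Ym: "1 \<le> i \<Longrightarrow> i \<le> n - 2 \<Longrightarrow> Ym i \<in> gbasis n"
  and gb_Yp: "1 \<le> i \<Longrightarrow> i \<le> n - 2 \<Longrightarrow> Yp i \<in> gbasis n"
  and gb_Z: "1 \<le> i \<Longrightarrow> i \<le> j \<Longrightarrow> j \<le> n - 2 \<Longrightarrow> Z i j \<in> gbasis n"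
  by (auto simp: gbasis_def)

definition Mb :: "nat \<Rightarrow> gvar \<Rightarrow> nat \<Rightarrow> nat \<Rightarrow> 'a::comm_ring_1 spoly" where
  "Mb n x r c =
    (if r < n-2 \<and> c < n-2 then brk (Z (min r c + 1) (max r c + 1)) x
     else if r < n-2 \<and> c = n-2 then - brk (Ym (r+1)) x
     else if r < n-2 \<and> c = n-1 then brk (Yp (r+1)) x
     else if c < n-2 \<and> r = n-2 then - brk (Ym (c+1)) x
     else if c < n-2 \<and> r = n-1 then brk (Yp (c+1)) x
     else if r = n-2 \<and> c = n-2 then - (2 * brk Xm x)
     else if r = n-1 \<and> c = n-1 then 2 * brk Xp x
     else brk H x)"

lemma Dx_Mmat: "Dx n x (Mmat n r c) = Mb n x r c"
  unfolding Mmat_def Mb_def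
  by (auto simp: Dx_var Dx_uminus Dx_two gb_Ym gb_Yp gb_Z)

lemma idx_cases:
  assumes "r < m + (2::nat)"
  obtains "r < m" | "r = m" | "r = m + 1"
  using assms by linarith

lemma n_obtain:
  assumes "2 \<le> (n::nat)"
  obtains m where "n = m + 2"
  using assms by (metis add.commute le_add_diff_inverse)

lemma sum_E_left: "t < (n::nat) \<Longrightarrow> (\<Sum>l<n. (if r = s \<and> l = t then 1 else 0) * M l c) = (if r = s then M t c else (0::'b::comm_ring_1))"
proof -
  have "\<And>l. (if r = s \<and> l = t then 1 else 0) * M l c = (if l = t then (if r = s then M t c else 0) else 0)" by auto
  then show "t < n \<Longrightarrow> ?thesis" by (simp add: sum.delta)
qed

lemma sum_E_right: "t < (n::nat) \<Longrightarrow> (\<Sum>l<n. M r l * (if c = s \<and> l = t then 1 else 0)) = (if c = s then M r t else (0::'b::comm_ring_1))"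
proof -
  have "\<And>l. M r l * (if c = s \<and> l = t then 1 else 0) = (if l = t then (if c = s then M r t else 0) else 0)" by auto
  then show "t < n \<Longrightarrow> ?thesis" by (simp add: sum.delta)
qed

lemma sum_diag_left: "r < (n::nat) \<Longrightarrow> (\<Sum>l<n. (if r = l then d r else 0) * M l c) = d r * (M r c::'b::comm_ring_1)"
proof -
  have "\<And>l. (if r = l then d r else 0) * M l c = (if l = r then d r * M r c else 0)" by auto
  then show "r < n \<Longrightarrow> ?thesis" by (simp add: sum.delta)
qed

lemma sum_diag_right: "c < (n::nat) \<Longrightarrow> (\<Sum>l<n. M r l * (if c = l then d c else 0)) = M r c * (d c::'b::comm_ring_1)"
proof -
  have "\<And>l. M r l * (if c = l then d c else 0) = (if l = c then M r c * d c else 0)" by auto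
  then show "c < n \<Longrightarrow> ?thesis" by (simp add: sum.delta)
qed

lemma minmax_aux:
  assumes "1 \<le> (j::nat)"
  shows "min r (j - 1) + 1 = min (r + 1) j" "max r (j - 1) + 1 = max (r + 1) j"
        "min (j - 1) r + 1 = min (r + 1) j" "max (j - 1) r + 1 = max (r + 1) j"
  using assms by (auto simp: min_def max_def)

definition goodK :: "nat \<Rightarrow> gvar \<Rightarrow> (nat \<Rightarrow> nat \<Rightarrow> 'a::comm_ring_1 spoly) \<Rightarrow> bool" where
  "goodK n x K \<longleftrightarrow> (\<forall>r<n. \<forall>c<n. Mb n x r c = (\<Sum>l<n. K r l * Mmat n l c) + (\<Sum>l<n. Mmat n r l * K c l))
     \<and> (\<Sum>i<n. K i i) = 0"

definition dH :: "nat \<Rightarrow> nat \<Rightarrow> 'a::comm_ring_1 spoly" where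
  "dH n r = (if r = n-2 then 1 else 0) - (if r = n-1 then 1 else 0)"

lemma goodK_H:
  assumes n: "2 \<le> n"
  shows "goodK n H (\<lambda>r l. if r = l then dH n r else 0)"
proof -
  have "Mb n H r c = dH n r * Mmat n r c + Mmat n r c * dH n c"
    if r: "r < n" and c: "c < n" for r c
  proof -
    obtain m where m: "n = m + 2" using n_obtain[OF n] .
    have "r < m \<or> r = m \<or> r = m + 1" using r unfolding m by linarith
    moreover have "c < m \<or> c = m \<or> c = m + 1" using c unfolding m by linarith
    ultimately show ?thesis unfolding m
      by (elim disjE) (simp_all add: Mb_def Mmat_def dH_def algebra_simps)
  qed
  moreover have "(\<Sum>i<n. dH n i) = (0::'a spoly)"
    using n by (simp add: sum_subtractf dH_def)
  ultimately show ?thesis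
    unfolding goodK_def by (auto simp: sum_diag_left sum_diag_right)
qed

lemma goodK_E:
  assumes t: "t < n" and st: "s \<noteq> t"
    and E: "\<And>r c. r < n \<Longrightarrow> c < n \<Longrightarrow> Mb n x r c = (if r = s then Mmat n t c else 0) + (if c = s then Mmat n r t else (0::'a::comm_ring_1 spoly))"
  shows "goodK n x (\<lambda>r l. if r = s \<and> l = t then (1::'a::comm_ring_1 spoly) else 0)"
proof -
  have "(\<Sum>i<n. (if i = s \<and> i = t then 1 else 0)) = (0::'a::comm_ring_1 spoly)"
    using st by (intro sum.neutral) auto
  moreover have "Mb n x r c = (\<Sum>l<n. (if r = s \<and> l = t then (1::'a spoly) else 0) * Mmat n l c) + (\<Sum>l<n. Mmat n r l * (if c = s \<and> l = t then 1 else 0))"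
    if "r < n" "c < n" for r c
    unfolding sum_E_left[OF t] sum_E_right[OF t] using that by (rule E)
  ultimately show ?thesis unfolding goodK_def by blast
qed

lemma goodK_Z: "goodK n (Z i j) (\<lambda>r l. (0::'a::comm_ring_1 spoly))"
proof -
  have "Mb n (Z i j) r c = (0::'a spoly)" for r c
    by (simp add: Mb_def)
  then show ?thesis by (simp add: goodK_def)
qed

lemma goodK_Xm:
  assumes n: "2 \<le> n"
  shows "goodK n Xm (\<lambda>r l. if r = n-1 \<and> l = n-2 then 1 else 0)"
proof (rule goodK_E)
  fix r c assume r: "r < n" and c: "c < n"
  show "Mb n Xm r c = (if r = n-1 then Mmat n (n-2) c else 0) + (if c = n-1 then Mmat n r (n-2) else 0)"
  proof -
    obtain m where m: "n = m + 2" using n_obtain[OF n] .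
    have "r < m \<or> r = m \<or> r = m + 1" using r unfolding m by linarith
    moreover have "c < m \<or> c = m \<or> c = m + 1" using c unfolding m by linarith
    ultimately show ?thesis unfolding m
      by (elim disjE) (simp_all add: Mb_def Mmat_def algebra_simps minmax_aux)
  qed
qed (use n in auto)

lemma goodK_Xp:
  assumes n: "2 \<le> n"
  shows "goodK n Xp (\<lambda>r l. if r = n-2 \<and> l = n-1 then 1 else 0)"
proof (rule goodK_E)
  fix r c assume r: "r < n" and c: "c < n"
  show "Mb n Xp r c = (if r = n-2 then Mmat n (n-1) c else 0) + (if c = n-2 then Mmat n r (n-1) else 0)"
  proof -
    obtain m where m: "n = m + 2" using n_obtain[OF n] .
    have "r < m \<or> r = m \<or> r = m + 1" using r unfolding m by linarith
    moreover have "c < m \<or> c = m \<or> c = m + 1" using c unfolding m by linarith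
    ultimately show ?thesis unfolding m
      by (elim disjE) (simp_all add: Mb_def Mmat_def algebra_simps minmax_aux)
  qed
qed (use n in auto)

lemma goodK_Ym:
  assumes n: "2 \<le> n" and j: "1 \<le> j" "j \<le> n - 2"
  shows "goodK n (Ym j) (\<lambda>r l. if r = n-1 \<and> l = j-1 then 1 else 0)"
proof (rule goodK_E)
  fix r c assume r: "r < n" and c: "c < n"
  show "Mb n (Ym j) r c = (if r = n-1 then Mmat n (j-1) c else 0) + (if c = n-1 then Mmat n r (j-1) else 0)"
  proof -
    obtain m where m: "n = m + 2" using n_obtain[OF n] .
    have "r < m \<or> r = m \<or> r = m + 1" using r unfolding m by linarith
    moreover have "c < m \<or> c = m \<or> c = m + 1" using c unfolding m by linarith
    moreover obtain k where k: "j = Suc k" using j by (cases j) auto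
    moreover have "k < m" using j k m by simp
    ultimately show ?thesis unfolding m k
      by (elim disjE) (simp_all add: Mb_def Mmat_def algebra_simps min.commute max.commute)
  qed
qed (use n j in auto)

lemma goodK_Yp:
  assumes n: "2 \<le> n" and j: "1 \<le> j" "j \<le> n - 2"
  shows "goodK n (Yp j) (\<lambda>r l. if r = n-2 \<and> l = j-1 then 1 else 0)"
proof (rule goodK_E)
  fix r c assume r: "r < n" and c: "c < n"
  show "Mb n (Yp j) r c = (if r = n-2 then Mmat n (j-1) c else 0) + (if c = n-2 then Mmat n r (j-1) else 0)"
  proof -
    obtain m where m: "n = m + 2" using n_obtain[OF n] .
    have "r < m \<or> r = m \<or> r = m + 1" using r unfolding m by linarith
    moreover have "c < m \<or> c = m \<or> c = m + 1" using c unfolding m by linarith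
    moreover obtain k where k: "j = Suc k" using j by (cases j) auto
    moreover have "k < m" using j k m by simp
    ultimately show ?thesis unfolding m k
      by (elim disjE) (simp_all add: Mb_def Mmat_def algebra_simps min.commute max.commute)
  qed
qed (use n j in auto)

lemma goodK_exists:
  assumes n: "2 \<le> n" and x: "x \<in> gbasis n"
  shows "\<exists>K. goodK n x (K :: nat \<Rightarrow> nat \<Rightarrow> 'a::comm_ring_1 spoly)"
  using x goodK_H[OF n] goodK_Xm[OF n] goodK_Xp[OF n] goodK_Ym[OF n] goodK_Yp[OF n] goodK_Z
  unfolding gbasis_def by fastforce

lemma Dx_Cn:
  assumes n: "2 \<le> n" and x: "x \<in> gbasis n"
  shows "Dx n x (Cn n :: 'a::comm_ring_1 spoly) = 0"
proof -
  obtain K :: "nat \<Rightarrow> nat \<Rightarrow> 'a spoly" where K: "goodK n x K" using goodK_exists[OF n x] by blast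
  have "Dx n x (Cn n :: 'a spoly) = - (\<Sum>i<n. \<Sum>j<n. Dx n x (Mn n $$ (i,j)) * cofactor (Mn n) i j)"
    by (simp add: Cn_det Dx_uminus Dx_det[OF Mn_carrier])
  also have "(\<Sum>i<n. \<Sum>j<n. Dx n x (Mn n $$ (i,j)) * cofactor (Mn n) i j) =
     (\<Sum>i<n. \<Sum>j<n. Mb n x i j * cofactor (Mn n :: 'a spoly mat) i j)"
    by (intro sum.cong refl) (simp add: Mn_index Dx_Mmat)
  also have "\<dots> = 2 * (\<Sum>i<n. K i i) * det (Mn n)"
    by (rule trace_lemma[OF Mn_carrier]) (use K in \<open>auto simp: goodK_def Mn_index\<close>)
  also have "\<dots> = 0" using K by (simp add: goodK_def)
  finally show ?thesis by simp
qed

subsection \<open>Support and degree\<close>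

definition suppG :: "gvar set \<Rightarrow> 'a::comm_ring_1 spoly \<Rightarrow> bool" where
  "suppG G p \<longleftrightarrow> (\<forall>m\<in>Poly_Mapping.keys p. Poly_Mapping.keys m \<subseteq> G)"

lemma suppG_add: "suppG G p \<Longrightarrow> suppG G q \<Longrightarrow> suppG G (p + q)"
  using keys_add[of p q] by (auto simp: suppG_def)

lemma suppG_uminus: "suppG G p \<Longrightarrow> suppG G (- p)"
  by (simp add: suppG_def keys_minus)

lemma suppG_mult: "suppG G p \<Longrightarrow> suppG G q \<Longrightarrow> suppG G (p * q)"
proof -
  assume p: "suppG G p" and q: "suppG G q"
  show ?thesis unfolding suppG_def
  proof
    fix m assume "m \<in> Poly_Mapping.keys (p * q)"
    then obtain a b where "m = a + b" "a \<in> Poly_Mapping.keys p" "b \<in> Poly_Mapping.keys q"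
      using keys_mult[of p q] by blast
    then have "Poly_Mapping.keys m \<subseteq> Poly_Mapping.keys a \<union> Poly_Mapping.keys b"
      using keys_add[of a b] by simp
    then show "Poly_Mapping.keys m \<subseteq> G"
      using p q \<open>a \<in> _\<close> \<open>b \<in> _\<close> unfolding suppG_def by blast
  qed
qed

lemma suppG_const: "suppG G (Poly_Mapping.single 0 c)"
  by (simp add: suppG_def)

lemma suppG_one: "suppG G 1"
  using suppG_const[of G 1] by (simp add: single_one)

lemma suppG_of_int: "suppG G (of_int k)"
  using suppG_const[of G "of_int k"] by simp

lemma suppG_numeral: "suppG G (numeral k)"
  using suppG_const[of G "numeral k"] by simp

lemma suppG_two: "suppG G 2"
  using suppG_const[of G 2] by simp

lemma keys_var: "Poly_Mapping.keys (var v :: 'a::comm_ring_1 spoly) = {Poly_Mapping.single v 1}"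
  by (simp add: var_def)

lemma suppG_var: "v \<in> G \<Longrightarrow> suppG G (var v)"
  by (simp add: suppG_def var_def)

lemma suppG_zero: "suppG G 0" by (simp add: suppG_def)

lemma suppG_sum: "(\<And>i. i \<in> I \<Longrightarrow> suppG G (f i)) \<Longrightarrow> suppG G (sum f I)"
  by (induction I rule: infinite_finite_induct) (auto simp: suppG_zero intro!: suppG_add)

lemma suppG_prod: "(\<And>i. i \<in> I \<Longrightarrow> suppG G (f i)) \<Longrightarrow> suppG G (prod f I)"
  by (induction I rule: infinite_finite_induct) (auto simp: suppG_one intro: suppG_mult)

definition deg :: "(gvar \<Rightarrow>\<^sub>0 nat) \<Rightarrow> nat" where
  "deg m = (\<Sum>v\<in>Poly_Mapping.keys m. Poly_Mapping.lookup m v)"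

lemma deg_superset: "finite T \<Longrightarrow> Poly_Mapping.keys m \<subseteq> T \<Longrightarrow> deg m = (\<Sum>v\<in>T. Poly_Mapping.lookup m v)"
  unfolding deg_def by (rule sum.mono_neutral_left) (auto simp: in_keys_iff)

lemma deg_add: "deg (m + m') = deg m + deg m'"
proof -
  let ?T = "Poly_Mapping.keys m \<union> Poly_Mapping.keys m'"
  have "deg (m + m') = (\<Sum>v\<in>?T. Poly_Mapping.lookup (m + m') v)"
    using keys_add[of m m'] by (intro deg_superset) auto
  also have "\<dots> = (\<Sum>v\<in>?T. Poly_Mapping.lookup m v) + (\<Sum>v\<in>?T. Poly_Mapping.lookup m' v)"
    by (simp add: lookup_add sum.distrib)
  also have "\<dots> = deg m + deg m'"
    by (subst (1 2) deg_superset) auto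
  finally show ?thesis .
qed

definition homd :: "nat \<Rightarrow> 'a::comm_ring_1 spoly \<Rightarrow> bool" where
  "homd d p \<longleftrightarrow> (\<forall>m\<in>Poly_Mapping.keys p. deg m = d)"

lemma homd_add: "homd d p \<Longrightarrow> homd d q \<Longrightarrow> homd d (p + q)"
  using keys_add[of p q] by (auto simp: homd_def)

lemma homd_uminus: "homd d p \<Longrightarrow> homd d (- p)"
  by (simp add: homd_def keys_minus)

lemma homd_mult: "homd d p \<Longrightarrow> homd e q \<Longrightarrow> homd (d + e) (p * q)"
proof -
  assume p: "homd d p" and q: "homd e q"
  show ?thesis unfolding homd_def
  proof
    fix m assume "m \<in> Poly_Mapping.keys (p * q)"
    then obtain a b where "m = a + b" "a \<in> Poly_Mapping.keys p" "b \<in> Poly_Mapping.keys q"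
      using keys_mult[of p q] by blast
    then show "deg m = d + e"
      using p q by (auto simp: homd_def deg_add)
  qed
qed

lemma homd_const: "homd 0 (Poly_Mapping.single 0 c)"
  by (simp add: homd_def deg_def)

lemma homd_two: "homd 0 2"
  using homd_const[of 2] by simp

lemma homd_one: "homd 0 1"
  using homd_const[of 1] by (simp add: single_one)

lemma homd_of_int: "homd 0 (of_int k)"
  using homd_const[of "of_int k"] by simp

lemma homd_numeral: "homd 0 (numeral k)"
  using homd_const[of "numeral k"] by simp

lemma homd_var: "homd 1 (var v)"
  by (simp add: homd_def var_def deg_def)

lemma homd_zero: "homd d 0" by (simp add: homd_def)

lemma homd_sum: "(\<And>i. i \<in> I \<Longrightarrow> homd d (f i)) \<Longrightarrow> homd d (sum f I)"
  by (induction I rule: infinite_finite_induct) (auto simp: homd_zero intro!: homd_add)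

lemma homd_prod: "finite I \<Longrightarrow> (\<And>i. i \<in> I \<Longrightarrow> homd 1 (f i)) \<Longrightarrow> homd (card I) (prod f I)"
proof (induction I rule: finite_induct)
  case empty then show ?case by (simp add: homd_one)
next
  case (insert x F)
  then have "homd (1 + card F) (f x * prod f F)" by (intro homd_mult) auto
  then show ?case using insert by simp
qed

lemma homd_two_var: "homd 1 (2 * var v)"
  using homd_mult[OF homd_two homd_var] by simp

lemma homd_Mmat: "homd 1 (Mmat n r c)"
proof -
  note a = homd_var homd_uminus[OF homd_var] homd_two_var homd_uminus[OF homd_two_var]
  show ?thesis unfolding Mmat_def by (simp only: a split: if_split) simp
qed

lemma suppG_two_var: assumes "v \<in> G" shows "suppG G (2 * var v)"
  using suppG_mult[OF suppG_two suppG_var[OF assms]] by simp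

lemma gb_Z': "r < n - 2 \<Longrightarrow> c < n - 2 \<Longrightarrow> Z (min r c + 1) (max r c + 1) \<in> gbasis n"
  by (rule gb_Z) (auto simp: min_def max_def)

lemma suppG_Mmat: "suppG (gbasis n) (Mmat n r c)"
proof -
  have a: "v \<in> gbasis n \<Longrightarrow> suppG (gbasis n) (var v)" "v \<in> gbasis n \<Longrightarrow> suppG (gbasis n) (- var v)"
     "v \<in> gbasis n \<Longrightarrow> suppG (gbasis n) (- (2 * var v))" "v \<in> gbasis n \<Longrightarrow> suppG (gbasis n) (2 * var v)" for v :: gvar
    by (auto intro: suppG_var suppG_uminus suppG_two_var)
  show ?thesis unfolding Mmat_def
    by (auto intro!: a gb_Z' gb_Ym gb_Yp simp del: One_nat_def)
qed

lemma homd_Cn: "homd n (Cn n)"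
  unfolding Cn_def detn_def
proof (intro homd_uminus homd_sum)
  fix p
  have "homd (0 + card {..<n}) (of_int (sign p) * (\<Prod>i<n. Mmat n i (p i)))"
    by (intro homd_mult homd_of_int homd_prod) (auto intro: homd_Mmat[unfolded One_nat_def] homd_Mmat)
  then show "homd n (of_int (sign p) * (\<Prod>i<n. Mmat n i (p i)))" by simp
qed

lemma suppG_Cn: "suppG (gbasis n) (Cn n)"
  unfolding Cn_def detn_def
  by (intro suppG_uminus suppG_sum suppG_mult suppG_of_int suppG_prod suppG_Mmat)

lemma casimir_Cn:
  assumes "2 \<le> n"
  shows "casimir n (Cn n :: 'a::comm_ring_1 spoly)"
  using suppG_Cn[of n] Dx_Cn[OF assms] unfolding casimir_def suppG_def by (auto simp: pb_var)

lemma casimir_Z: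
  assumes "1 \<le> i" "i \<le> j" "j \<le> n - 2"
  shows "casimir n (var (Z i j) :: 'a::comm_ring_1 spoly)"
  using assms gb_Z[OF assms] unfolding casimir_def by (auto simp: pb_var Dx_var keys_var)

subsection \<open>A point where the gradient of C_n is nonzero\<close>

definition xi0 :: "gvar \<Rightarrow> 'a::field_char_0" where
  "xi0 v = (case v of Z i j \<Rightarrow> if i = j then 1 else 0 | Xm \<Rightarrow> - (1/2) | _ \<Rightarrow> 0)"

lemma pd_Xp_Mmat:
  assumes n: "2 \<le> n" and r: "r < n" and c: "c < n"
  shows "pd Xp (Mmat n r c :: 'a::comm_ring_1 spoly) = (if r = n-1 \<and> c = n-1 then 2 else 0)"
proof -
  obtain m where m: "n = m + 2" using n_obtain[OF n] .
  have "r < m \<or> r = m \<or> r = m + 1" using r unfolding m by linarith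
  moreover have "c < m \<or> c = m \<or> c = m + 1" using c unfolding m by linarith
  ultimately show ?thesis unfolding m
    by (elim disjE) (simp_all add: Mmat_def pd_var pd_uminus pd_mult pd_numeral)
qed

lemma peval_two: "peval \<xi> 2 = 2"
  by (rule peval_hom.hom_numeral)

lemma peval_xi0_Mmat:
  assumes n: "2 \<le> n" and r: "r < n - 1" and c: "c < n - 1"
  shows "peval xi0 (Mmat n r c :: 'a::field_char_0 spoly) = (if r = c then 1 else 0)"
proof -
  obtain m where m: "n = m + 2" using n_obtain[OF n] .
  have "r < m \<or> r = m" using r unfolding m by linarith
  moreover have "c < m \<or> c = m" using c unfolding m by linarith
  ultimately show ?thesis unfolding m
    by (elim disjE) (auto simp: Mmat_def peval_var xi0_def min_def max_def peval_hom.hom_uminus peval_mult peval_two)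
qed

lemma peval_pd_Xp_Cn:
  assumes n: "2 \<le> n"
  shows "peval xi0 (pd Xp (Cn n :: 'a::field_char_0 spoly)) = - 2"
proof -
  have nn: "n - 1 < n" using n by simp
  have "pd Xp (det (Mn n :: 'a spoly mat)) = (\<Sum>i<n. \<Sum>j<n. (if i = n-1 \<and> j = n-1 then 2 else 0) * cofactor (Mn n) i j)"
    unfolding pd_det[OF Mn_carrier]
    by (intro sum.cong refl) (simp add: Mn_index pd_Xp_Mmat[OF n])
  also have "\<dots> = 2 * cofactor (Mn n :: 'a spoly mat) (n-1) (n-1)"
  proof -
    have "\<And>i. (\<Sum>j<n. (if i = n-1 \<and> j = n-1 then 2 else 0) * cofactor (Mn n :: 'a spoly mat) i j)
        = (if i = n - 1 then 2 * cofactor (Mn n) (n-1) (n-1) else 0)"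
    proof -
      fix i
      have "\<And>j. (if i = n-1 \<and> j = n-1 then 2 else 0) * cofactor (Mn n :: 'a spoly mat) i j
          = (if j = n - 1 then (if i = n - 1 then 2 * cofactor (Mn n) (n-1) (n-1) else 0) else 0)"
        by simp
      then show "(\<Sum>j<n. (if i = n-1 \<and> j = n-1 then 2 else 0) * cofactor (Mn n :: 'a spoly mat) i j)
        = (if i = n - 1 then 2 * cofactor (Mn n) (n-1) (n-1) else 0)"
        using nn by (simp add: sum.delta)
    qed
    then show ?thesis using nn by (simp add: sum.delta)
  qed
  finally have e1: "pd Xp (det (Mn n :: 'a spoly mat)) = 2 * cofactor (Mn n) (n-1) (n-1)" .
  have e2: "map_mat (peval xi0) (mat_delete (Mn n :: 'a spoly mat) (n-1) (n-1)) = 1\<^sub>m (n-1)"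
    by (rule eq_matI) (auto simp: mat_delete_def Mn_def peval_xi0_Mmat[OF n])
  have "peval xi0 (cofactor (Mn n :: 'a spoly mat) (n-1) (n-1)) = 1"
  proof -
    have "peval xi0 (det (mat_delete (Mn n :: 'a spoly mat) (n-1) (n-1))) = det (map_mat (peval xi0) (mat_delete (Mn n :: 'a spoly mat) (n-1) (n-1)))"
      by (simp only: peval_hom.hom_det)
    also have "\<dots> = 1" by (simp only: e2 det_one)
    finally have "peval xi0 (det (mat_delete (Mn n :: 'a spoly mat) (n-1) (n-1))) = 1" .
    moreover have "((-1) ^ (n - 1 + (n - 1)) :: 'a spoly) = 1"
      by (rule neg_one_even_power) simp
    ultimately show ?thesis by (simp add: cofactor_def peval_mult)
  qed
  then show ?thesis
    by (simp add: Cn_det pd_uminus e1 peval_mult peval_hom.hom_uminus peval_two)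
qed

lemma Cn_nonzero: "2 \<le> n \<Longrightarrow> Cn n \<noteq> (0 :: 'a::field_char_0 spoly)"
  using peval_pd_Xp_Cn[of n, where 'a='a] by (auto simp: pd_zero peval_zero)

fun genc :: "gvar \<Rightarrow> nat" where
  "genc H = prod_encode (0, 0)"
| "genc Xm = prod_encode (1, 0)"
| "genc Xp = prod_encode (2, 0)"
| "genc (Ym i) = prod_encode (3, i)"
| "genc (Yp i) = prod_encode (4, i)"
| "genc (Z i j) = prod_encode (5, prod_encode (i, j))"

lemma genc_inj: "genc x = genc y \<Longrightarrow> x = y"
  by (cases x; cases y) (auto simp: prod_encode_eq)

instantiation gvar :: linorder
begin
definition less_eq_gvar :: "gvar \<Rightarrow> gvar \<Rightarrow> bool" where "less_eq_gvar x y \<longleftrightarrow> genc x \<le> genc y"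
definition less_gvar :: "gvar \<Rightarrow> gvar \<Rightarrow> bool" where "less_gvar x y \<longleftrightarrow> genc x < genc y"
instance
  by standard (auto simp: less_eq_gvar_def less_gvar_def intro: genc_inj)
end

definition Zs :: "nat \<Rightarrow> gvar set" where
  "Zs n = {Z i j | i j. 1 \<le> i \<and> i \<le> j \<and> j \<le> n-2}"

lemma finite_Zs: "finite (Zs n)"
  using finite_gbasis[of n] by (rule finite_subset[rotated]) (auto simp: Zs_def gbasis_def)

lemma sum_gbasis:
  "(\<Sum>a\<in>gbasis n. f a) = f H + f Xm + f Xp + (\<Sum>i<n-2. f (Ym (Suc i))) + (\<Sum>i<n-2. f (Yp (Suc i))) + (\<Sum>a\<in>Zs n. f a)"
proof -
  have Ym: "Ym ` {1..n-2} = (\<lambda>i. Ym (Suc i)) ` {..<n-2}"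
    by (auto simp: image_iff) (metis Suc_pred' atLeastAtMost_iff lessThan_iff less_eq_Suc_le not_less_eq_eq)
  have Yp: "Yp ` {1..n-2} = (\<lambda>i. Yp (Suc i)) ` {..<n-2}"
    by (auto simp: image_iff) (metis Suc_pred' atLeastAtMost_iff lessThan_iff less_eq_Suc_le not_less_eq_eq)
  have g: "gbasis n = {H, Xm, Xp} \<union> (\<lambda>i. Ym (Suc i)) ` {..<n-2} \<union> (\<lambda>i. Yp (Suc i)) ` {..<n-2} \<union> Zs n"
    unfolding gbasis_def Zs_def Ym Yp by blast
  have fin: "finite ((\<lambda>i. Ym (Suc i)) ` {..<n-2})" "finite ((\<lambda>i. Yp (Suc i)) ` {..<n-2})" by auto
  have "(\<Sum>a\<in>gbasis n. f a) = (\<Sum>a\<in>{H, Xm, Xp}. f a) + (\<Sum>a\<in>(\<lambda>i. Ym (Suc i)) ` {..<n-2}. f a)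
     + (\<Sum>a\<in>(\<lambda>i. Yp (Suc i)) ` {..<n-2}. f a) + (\<Sum>a\<in>Zs n. f a)"
  proof -
    let ?S0 = "{H, Xm, Xp}" and ?S1 = "(\<lambda>i. Ym (Suc i)) ` {..<n-2}" and ?S2 = "(\<lambda>i. Yp (Suc i)) ` {..<n-2}"
    have "sum f (?S0 \<union> ?S1 \<union> ?S2 \<union> Zs n) = sum f (?S0 \<union> ?S1 \<union> ?S2) + sum f (Zs n)"
      by (rule sum.union_disjoint) (use fin finite_Zs in \<open>auto simp: Zs_def\<close>)
    also have "sum f (?S0 \<union> ?S1 \<union> ?S2) = sum f (?S0 \<union> ?S1) + sum f ?S2"
      by (rule sum.union_disjoint) (use fin in auto)
    also have "sum f (?S0 \<union> ?S1) = sum f ?S0 + sum f ?S1"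
      by (rule sum.union_disjoint) (use fin in auto)
    finally show ?thesis unfolding g .
  qed
  also have "(\<Sum>a\<in>(\<lambda>i. Ym (Suc i)) ` {..<n-2}. f a) = (\<Sum>i<n-2. f (Ym (Suc i)))"
    by (subst sum.reindex) (auto simp: inj_on_def)
  also have "(\<Sum>a\<in>(\<lambda>i. Yp (Suc i)) ` {..<n-2}. f a) = (\<Sum>i<n-2. f (Yp (Suc i)))"
    by (subst sum.reindex) (auto simp: inj_on_def)
  finally show ?thesis by (simp add: add.assoc)
qed

definition zz :: "nat \<Rightarrow> nat \<Rightarrow> 'a::comm_ring_1 spoly" where
  "zz i j = var (Z (Suc (min i j)) (Suc (max i j)))"

lemma zz_sym: "zz i j = zz j i"
  by (simp add: zz_def min.commute max.commute)

definition kerG :: "nat \<Rightarrow> (gvar \<Rightarrow> 'a::comm_ring_1 spoly) \<Rightarrow> bool" where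
  "kerG n G \<longleftrightarrow>
    (- (2 * var Xm) * G H + var H * G Xp - (\<Sum>i<n-2. var (Ym (Suc i)) * G (Yp (Suc i))) = 0) \<and>
    (2 * var Xp * G H - var H * G Xm - (\<Sum>i<n-2. var (Yp (Suc i)) * G (Ym (Suc i))) = 0) \<and>
    (\<forall>j<n-2. - var (Ym (Suc j)) * G H + var (Yp (Suc j)) * G Xp + (\<Sum>i<n-2. zz i j * G (Yp (Suc i))) = 0) \<and>
    (\<forall>j<n-2. var (Yp (Suc j)) * G H + var (Ym (Suc j)) * G Xm - (\<Sum>i<n-2. zz i j * G (Ym (Suc i))) = 0)"

lemma Zs_part: "(\<And>i j. brk (Z i j) x = 0) \<Longrightarrow> (\<Sum>a\<in>Zs n. brk a x * f a) = (0::'a::comm_ring_1 spoly)"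
  by (intro sum.neutral) (auto simp: Zs_def)

lemma casimir_ker:
  assumes C: "casimir n (C :: 'a::comm_ring_1 spoly)"
  shows "kerG n (\<lambda>a. pd a C)"
proof -
  have D: "Dx n x C = 0" if "x \<in> gbasis n" for x
    using C that by (simp add: casimir_def pb_var)
  have e: "(\<Sum>a\<in>gbasis n. brk a x * pd a C) = 0" if "x \<in> gbasis n" for x
    using D[OF that] by (simp add: Dx_def)
  have gY: "j < n - 2 \<Longrightarrow> Ym (Suc j) \<in> gbasis n" "j < n - 2 \<Longrightarrow> Yp (Suc j) \<in> gbasis n" for j
    by (auto intro: gb_Ym gb_Yp)
  have e2: "brk H x * pd H C + brk Xm x * pd Xm C + brk Xp x * pd Xp C + (\<Sum>i<n-2. brk (Ym (Suc i)) x * pd (Ym (Suc i)) C) + (\<Sum>i<n-2. brk (Yp (Suc i)) x * pd (Yp (Suc i)) C) = 0"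
    if "x \<in> gbasis n" "\<And>i j. brk (Z i j) x = (0::'a spoly)" for x
    using e[OF that(1)] unfolding sum_gbasis Zs_part[OF that(2)] by simp
  have 1: "- (2 * var Xm) * pd H C + var H * pd Xp C - (\<Sum>i<n-2. var (Ym (Suc i)) * pd (Yp (Suc i)) C) = 0"
    using e2[OF gb_Xm] by (simp add: sum_negf)
  have 2: "2 * var Xp * pd H C - var H * pd Xm C - (\<Sum>i<n-2. var (Yp (Suc i)) * pd (Ym (Suc i)) C) = 0"
    using e2[OF gb_Xp] by (simp add: sum_negf)
  have 3: "- var (Ym (Suc j)) * pd H C + var (Yp (Suc j)) * pd Xp C + (\<Sum>i<n-2. zz i j * pd (Yp (Suc i)) C) = 0"
    if "j < n - 2" for j
    using e2[OF gY(1)[OF that]] by (simp add: zz_def algebra_simps)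
  have 4: "var (Yp (Suc j)) * pd H C + var (Ym (Suc j)) * pd Xm C - (\<Sum>i<n-2. zz i j * pd (Ym (Suc i)) C) = 0"
    if "j < n - 2" for j
    using e2[OF gY(2)[OF that]] by (simp add: zz_def algebra_simps sum_negf min.commute max.commute)
  show ?thesis unfolding kerG_def using 1 2 3 4 by blast
qed

definition Zb :: "nat \<Rightarrow> 'a::comm_ring_1 spoly mat" where
  "Zb n = mat (n-2) (n-2) (\<lambda>(i,j). zz i j)"

definition dZ :: "nat \<Rightarrow> 'a::comm_ring_1 spoly" where
  "dZ n = det (Zb n)"

lemma Zb_carrier: "Zb n \<in> carrier_mat (n-2) (n-2)" by (simp add: Zb_def)

lemma solve_Zb:
  assumes eq: "\<And>j. j < n - 2 \<Longrightarrow> (\<Sum>i<n-2. zz i j * v i) = (w j :: 'a::comm_ring_1 spoly)"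
    and k: "k < n - 2"
  shows "dZ n * v k = (\<Sum>j<n-2. cofactor (Zb n) j k * w j)"
proof -
  have "(\<Sum>j<n-2. cofactor (Zb n) j k * w j) = (\<Sum>j<n-2. \<Sum>i<n-2. cofactor (Zb n) j k * (zz i j * v i))"
    by (intro sum.cong refl) (simp add: eq[symmetric] sum_distrib_left)
  also have "\<dots> = (\<Sum>i<n-2. \<Sum>j<n-2. cofactor (Zb n) j k * (zz i j * v i))"
    by (rule sum.swap)
  also have "\<dots> = (\<Sum>i<n-2. v i * (\<Sum>j<n-2. cofactor (Zb n) j k * Zb n $$ (j, i)))"
    by (intro sum.cong refl) (auto simp: sum_distrib_left Zb_def zz_sym mult_ac)
  also have "\<dots> = (\<Sum>i<n-2. v i * (if k = i then dZ n else 0))"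
    by (intro sum.cong refl) (simp add: adj_col[OF Zb_carrier _ k] dZ_def)
  also have "\<dots> = dZ n * v k"
    using k by (simp add: if_distrib[of "\<lambda>x. v _ * x"] sum.delta' mult.commute cong: if_cong)
  finally show ?thesis by simp
qed

definition s1 :: "nat \<Rightarrow> nat \<Rightarrow> 'a::comm_ring_1 spoly" where
  "s1 n k = (\<Sum>j<n-2. cofactor (Zb n) j k * var (Ym (Suc j)))"
definition s2 :: "nat \<Rightarrow> nat \<Rightarrow> 'a::comm_ring_1 spoly" where
  "s2 n k = (\<Sum>j<n-2. cofactor (Zb n) j k * var (Yp (Suc j)))"
definition alpha :: "nat \<Rightarrow> 'a::comm_ring_1 spoly" where
  "alpha n = var H * dZ n + (\<Sum>i<n-2. var (Ym (Suc i)) * s2 n i)"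
definition beta :: "nat \<Rightarrow> 'a::comm_ring_1 spoly" where
  "beta n = var H * dZ n + (\<Sum>i<n-2. var (Yp (Suc i)) * s1 n i)"
definition P1 :: "nat \<Rightarrow> 'a::comm_ring_1 spoly" where
  "P1 n = 2 * var Xm * dZ n + (\<Sum>i<n-2. var (Ym (Suc i)) * s1 n i)"
definition P2 :: "nat \<Rightarrow> 'a::comm_ring_1 spoly" where
  "P2 n = 2 * var Xp * dZ n - (\<Sum>i<n-2. var (Yp (Suc i)) * s2 n i)"

lemma elim_Yp:
  assumes G: "kerG n G" and k: "k < n - 2"
  shows "dZ n * G (Yp (Suc k)) = G H * s1 n k - G Xp * s2 n k"
proof -
  have "dZ n * G (Yp (Suc k)) = (\<Sum>j<n-2. cofactor (Zb n) j k * (var (Ym (Suc j)) * G H - var (Yp (Suc j)) * G Xp))"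
  proof (rule solve_Zb[OF _ k])
    fix j assume "j < n - 2"
    then show "(\<Sum>i<n-2. zz i j * G (Yp (Suc i))) = var (Ym (Suc j)) * G H - var (Yp (Suc j)) * G Xp"
      using G unfolding kerG_def by (auto simp: algebra_simps eq_neg_iff_add_eq_0)
  qed
  then show ?thesis
    by (simp add: s1_def s2_def right_diff_distrib sum_subtractf sum_distrib_left mult_ac)
qed

lemma elim_Ym:
  assumes G: "kerG n G" and k: "k < n - 2"
  shows "dZ n * G (Ym (Suc k)) = G H * s2 n k + G Xm * s1 n k"
proof -
  have "dZ n * G (Ym (Suc k)) = (\<Sum>j<n-2. cofactor (Zb n) j k * (var (Yp (Suc j)) * G H + var (Ym (Suc j)) * G Xm))"
  proof (rule solve_Zb[OF _ k])
    fix j assume "j < n - 2"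
    then show "(\<Sum>i<n-2. zz i j * G (Ym (Suc i))) = var (Yp (Suc j)) * G H + var (Ym (Suc j)) * G Xm"
      using G unfolding kerG_def by (auto simp: algebra_simps)
  qed
  then show ?thesis
    by (simp add: s1_def s2_def distrib_left sum.distrib sum_distrib_left mult_ac)
qed

lemma elim_Xp:
  assumes G: "kerG n G"
  shows "alpha n * G Xp = P1 n * G H"
proof -
  have e: "- (2 * var Xm) * G H + var H * G Xp - (\<Sum>i<n-2. var (Ym (Suc i)) * G (Yp (Suc i))) = 0"
    using G by (simp add: kerG_def)
  have "dZ n * (- (2 * var Xm) * G H + var H * G Xp - (\<Sum>i<n-2. var (Ym (Suc i)) * G (Yp (Suc i)))) = 0"
    by (simp only: e mult_zero_right)
  then have "- (2 * var Xm) * G H * dZ n + var H * G Xp * dZ n - (\<Sum>i<n-2. var (Ym (Suc i)) * (dZ n * G (Yp (Suc i)))) = 0"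
    by (simp add: algebra_simps sum_distrib_left)
  then have "- (2 * var Xm) * G H * dZ n + var H * G Xp * dZ n - (\<Sum>i<n-2. var (Ym (Suc i)) * (G H * s1 n i - G Xp * s2 n i)) = 0"
    using elim_Yp[OF G] by simp
  then show ?thesis
    by (simp add: alpha_def P1_def algebra_simps sum_subtractf sum_distrib_left sum_distrib_right)
qed

lemma elim_Xm:
  assumes G: "kerG n G"
  shows "beta n * G Xm = P2 n * G H"
proof -
  have e: "2 * var Xp * G H - var H * G Xm - (\<Sum>i<n-2. var (Yp (Suc i)) * G (Ym (Suc i))) = 0"
    using G by (simp add: kerG_def)
  have "dZ n * (2 * var Xp * G H - var H * G Xm - (\<Sum>i<n-2. var (Yp (Suc i)) * G (Ym (Suc i)))) = 0"
    by (simp only: e mult_zero_right)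
  then have "2 * var Xp * G H * dZ n - var H * G Xm * dZ n - (\<Sum>i<n-2. var (Yp (Suc i)) * (dZ n * G (Ym (Suc i)))) = 0"
    by (simp add: algebra_simps sum_distrib_left)
  then have "2 * var Xp * G H * dZ n - var H * G Xm * dZ n - (\<Sum>i<n-2. var (Yp (Suc i)) * (G H * s2 n i + G Xm * s1 n i)) = 0"
    using elim_Ym[OF G] by simp
  then show ?thesis
    by (simp add: beta_def P2_def algebra_simps sum.distrib sum_distrib_left sum_distrib_right)
qed

definition Dd :: "nat \<Rightarrow> 'a::comm_ring_1 spoly" where
  "Dd n = alpha n * beta n * dZ n"

definition uu :: "nat \<Rightarrow> gvar \<Rightarrow> 'a::comm_ring_1 spoly" where
  "uu n a = (case a of H \<Rightarrow> Dd n | Xp \<Rightarrow> beta n * dZ n * P1 n | Xm \<Rightarrow> alpha n * dZ n * P2 n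
     | Yp i \<Rightarrow> beta n * (alpha n * s1 n (i - 1) - s2 n (i - 1) * P1 n)
     | Ym i \<Rightarrow> alpha n * (beta n * s2 n (i - 1) + s1 n (i - 1) * P2 n)
     | Z i j \<Rightarrow> 0)"

definition VV :: "nat \<Rightarrow> gvar set" where
  "VV n = {H, Xm, Xp} \<union> (\<lambda>i. Ym (Suc i)) ` {..<n-2} \<union> (\<lambda>i. Yp (Suc i)) ` {..<n-2}"

lemma elim_all:
  assumes G: "kerG n G" and a: "a \<in> VV n"
  shows "Dd n * G a = uu n a * G H"
proof -
  have Xp: "Dd n * G Xp = uu n Xp * G H"
  proof -
    have "Dd n * G Xp = beta n * dZ n * (alpha n * G Xp)" by (simp add: Dd_def mult_ac)
    also have "\<dots> = beta n * dZ n * (P1 n * G H)" by (simp only: elim_Xp[OF G])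
    also have "\<dots> = uu n Xp * G H" by (simp add: uu_def mult_ac)
    finally show ?thesis .
  qed
  have Xm: "Dd n * G Xm = uu n Xm * G H"
  proof -
    have "Dd n * G Xm = alpha n * dZ n * (beta n * G Xm)" by (simp add: Dd_def mult_ac)
    also have "\<dots> = alpha n * dZ n * (P2 n * G H)" by (simp only: elim_Xm[OF G])
    also have "\<dots> = uu n Xm * G H" by (simp add: uu_def mult_ac)
    finally show ?thesis .
  qed
  have Yp: "Dd n * G (Yp (Suc k)) = uu n (Yp (Suc k)) * G H" if k: "k < n - 2" for k
  proof -
    have "Dd n * G (Yp (Suc k)) = alpha n * beta n * (dZ n * G (Yp (Suc k)))" by (simp add: Dd_def mult_ac)
    also have "\<dots> = beta n * (alpha n * s1 n k * G H - s2 n k * (alpha n * G Xp))"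
      by (simp add: elim_Yp[OF G k] algebra_simps)
    also have "\<dots> = beta n * (alpha n * s1 n k * G H - s2 n k * (P1 n * G H))" by (simp only: elim_Xp[OF G])
    also have "\<dots> = uu n (Yp (Suc k)) * G H" by (simp add: uu_def algebra_simps)
    finally show ?thesis .
  qed
  have Ym: "Dd n * G (Ym (Suc k)) = uu n (Ym (Suc k)) * G H" if k: "k < n - 2" for k
  proof -
    have "Dd n * G (Ym (Suc k)) = alpha n * beta n * (dZ n * G (Ym (Suc k)))" by (simp add: Dd_def mult_ac)
    also have "\<dots> = alpha n * (beta n * s2 n k * G H + s1 n k * (beta n * G Xm))"
      by (simp add: elim_Ym[OF G k] algebra_simps)
    also have "\<dots> = alpha n * (beta n * s2 n k * G H + s1 n k * (P2 n * G H))" by (simp only: elim_Xm[OF G])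
    also have "\<dots> = uu n (Ym (Suc k)) * G H" by (simp add: uu_def algebra_simps)
    finally show ?thesis .
  qed
  show ?thesis using a Xp Xm Yp Ym unfolding VV_def by (auto simp: uu_def mult.commute)
qed

lemma kernel_parallel:
  fixes G G' :: "gvar \<Rightarrow> 'a::{idom} spoly"
  assumes G: "kerG n G" and G': "kerG n G'" and D: "Dd n \<noteq> (0 :: 'a spoly)"
    and a: "a \<in> VV n" and b: "b \<in> VV n"
  shows "G a * G' b = G b * G' a"
proof -
  have "Dd n * Dd n * (G a * G' b - G b * G' a) = (Dd n * G a) * (Dd n * G' b) - (Dd n * G b) * (Dd n * G' a)"
    by (simp add: algebra_simps)
  also have "\<dots> = 0"
    unfolding elim_all[OF G a] elim_all[OF G b] elim_all[OF G' a] elim_all[OF G' b] by (simp add: algebra_simps)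
  finally have "Dd n * Dd n * (G a * G' b - G b * G' a) = 0" .
  then have "G a * G' b - G b * G' a = 0" using D by (metis mult_eq_0_iff)
  then show ?thesis by simp
qed

definition xi1 :: "gvar \<Rightarrow> 'a::comm_ring_1" where
  "xi1 v = (case v of Z i j \<Rightarrow> if i = j then 1 else 0 | H \<Rightarrow> 1 | _ \<Rightarrow> 0)"

lemma peval_xi1_dZ: "peval xi1 (dZ n :: 'a::comm_ring_1 spoly) = 1"
proof -
  have e: "map_mat (peval xi1) (Zb n :: 'a spoly mat) = 1\<^sub>m (n-2)"
    by (rule eq_matI) (auto simp: Zb_def zz_def peval_var xi1_def min_def max_def)
  have "peval xi1 (dZ n :: 'a spoly) = det (map_mat (peval xi1) (Zb n :: 'a spoly mat))"
    unfolding dZ_def by (simp only: peval_hom.hom_det)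
  also have "\<dots> = 1" by (simp only: e det_one)
  finally show ?thesis .
qed

lemma peval_xi1_s1: "peval xi1 (s1 n k :: 'a::comm_ring_1 spoly) = 0"
  by (simp add: s1_def peval_hom.hom_sum peval_mult peval_var xi1_def)

lemma peval_xi1_s2: "peval xi1 (s2 n k :: 'a::comm_ring_1 spoly) = 0"
  by (simp add: s2_def peval_hom.hom_sum peval_mult peval_var xi1_def)

lemma Dd_nonzero: "Dd n \<noteq> (0 :: 'a::comm_ring_1 spoly)"
proof -
  have "peval xi1 (alpha n :: 'a spoly) = 1"
    by (simp add: alpha_def peval_add peval_mult peval_hom.hom_sum peval_var peval_xi1_dZ peval_xi1_s2 xi1_def)
  moreover have "peval xi1 (beta n :: 'a spoly) = 1"
    by (simp add: beta_def peval_add peval_mult peval_hom.hom_sum peval_var peval_xi1_dZ peval_xi1_s1 xi1_def)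
  ultimately have "peval xi1 (Dd n :: 'a spoly) = 1"
    by (simp add: Dd_def peval_mult peval_xi1_dZ)
  then show ?thesis by (auto simp: peval_zero)
qed

lemma zpairs_alt: "zpairs n = concat (map (\<lambda>i. map (Pair i) [i..<n-1]) [1..<n-1])"
  by (simp add: zpairs_def)

lemma zpairs_set: "set (zpairs n) = {(i,j). 1 \<le> i \<and> i \<le> j \<and> j \<le> n - 2}"
  unfolding zpairs_alt
proof (auto, goal_cases)
  case (1 a b)
  then show ?case by (intro bexI[of _ a]) auto
qed

lemma distinct_pairs: "distinct xs \<Longrightarrow> (\<And>i. distinct (f i)) \<Longrightarrow> distinct (concat (map (\<lambda>i. map (Pair i) (f i)) xs))"
  by (induction xs) (auto simp: distinct_map inj_on_def)

lemma zpairs_distinct: "distinct (zpairs n)"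
  unfolding zpairs_alt by (rule distinct_pairs) auto


lemma peval_pd_var: "peval \<xi> (pd a (var v) :: 'a::comm_ring_1 spoly) = (if a = v then 1 else 0)"
  by (simp add: pd_var peval_one peval_zero)

lemma sum_zp_delta:
  assumes k0: "k0 < length (zpairs n)" and e: "zpairs n ! k0 = (i, j)"
  shows "(\<Sum>k<length (zpairs n). f k * (if Z i j = Z (fst (zpairs n ! k)) (snd (zpairs n ! k)) then 1 else 0))
      = (f k0 :: 'a::comm_ring_1)"
proof -
  have "\<And>k. k < length (zpairs n) \<Longrightarrow> (Z i j = Z (fst (zpairs n ! k)) (snd (zpairs n ! k))) = (k = k0)"
  proof -
    fix k assume k: "k < length (zpairs n)"
    have "(Z i j = Z (fst (zpairs n ! k)) (snd (zpairs n ! k))) = (zpairs n ! k = zpairs n ! k0)"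
      using e by (cases "zpairs n ! k") auto
    also have "\<dots> = (k = k0)" using nth_eq_iff_index_eq[OF zpairs_distinct k k0] .
    finally show "(Z i j = Z (fst (zpairs n ! k)) (snd (zpairs n ! k))) = (k = k0)" .
  qed
  then have "(\<Sum>k<length (zpairs n). f k * (if Z i j = Z (fst (zpairs n ! k)) (snd (zpairs n ! k)) then 1 else 0))
      = (\<Sum>k<length (zpairs n). if k = k0 then f k else 0)"
    by (intro sum.cong refl) auto
  also have "\<dots> = f k0" using k0 by (simp add: sum.delta)
  finally show ?thesis .
qed

lemma sum_Suc2: "(\<Sum>k<Suc (Suc L). h k) = h 0 + h 1 + (\<Sum>k<L. h (Suc (Suc k)))"
  by (simp add: sum.lessThan_Suc_shift add.assoc del: sum.lessThan_Suc)

lemma sum_Suc1: "(\<Sum>k<Suc L. h k) = h 0 + (\<Sum>k<L. h (Suc k))"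
  by (simp add: sum.lessThan_Suc_shift del: sum.lessThan_Suc)

lemma gbasis_VV_Zs: "gbasis n = VV n \<union> Zs n"
proof -
  have Ym: "Ym ` {1..n-2} = (\<lambda>i. Ym (Suc i)) ` {..<n-2}"
    by (auto simp: image_iff) (metis Suc_pred' atLeastAtMost_iff lessThan_iff less_eq_Suc_le not_less_eq_eq)
  have Yp: "Yp ` {1..n-2} = (\<lambda>i. Yp (Suc i)) ` {..<n-2}"
    by (auto simp: image_iff) (metis Suc_pred' atLeastAtMost_iff lessThan_iff less_eq_Suc_le not_less_eq_eq)
  show ?thesis unfolding gbasis_def VV_def Zs_def Ym Yp by blast
qed

lemma VV_notZ: "a \<in> VV n \<Longrightarrow> a \<noteq> Z i j"
  by (auto simp: VV_def)

lemma not_indep: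
  fixes F0 F1 :: "'a::comm_ring_1 spoly"
  assumes c01: "c0 \<noteq> 0 \<or> c1 \<noteq> 0"
    and lin: "\<And>a. a \<in> VV n \<Longrightarrow> c0 * peval \<xi> (pd a F0) + c1 * peval \<xi> (pd a F1) = 0"
  shows "\<not> grad_indep_at n (F0 # F1 # map (\<lambda>(i, j). var (Z i j)) (zpairs n)) \<xi>"
proof -
  let ?Fs = "F0 # F1 # map (\<lambda>(i, j). var (Z i j)) (zpairs n)"
  let ?L = "length (zpairs n)"
  let ?zp = "\<lambda>k. Z (fst (zpairs n ! k)) (snd (zpairs n ! k))"
  define c where "c k = (if k = 0 then c0 else if k = 1 then c1 else
      - (c0 * peval \<xi> (pd (?zp (k - 2)) F0) + c1 * peval \<xi> (pd (?zp (k - 2)) F1)))" for k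
  have nth: "?Fs ! Suc (Suc k) = var (?zp k)" if "k < ?L" for k
    using that by (simp add: case_prod_beta)
  have main: "(\<Sum>k<length ?Fs. c k * peval \<xi> (pd a (?Fs ! k))) = 0" if a: "a \<in> gbasis n" for a
  proof -
    have "(\<Sum>k<length ?Fs. c k * peval \<xi> (pd a (?Fs ! k))) =
      c0 * peval \<xi> (pd a F0) + c1 * peval \<xi> (pd a F1) +
      (\<Sum>k<?L. c (Suc (Suc k)) * (if a = ?zp k then 1 else 0))"
    proof -
      have l: "length ?Fs = Suc (Suc ?L)" by simp
      have "(\<Sum>k<?L. c (Suc (Suc k)) * peval \<xi> (pd a (?Fs ! Suc (Suc k)))) =
            (\<Sum>k<?L. c (Suc (Suc k)) * (if a = ?zp k then 1 else 0))"
        by (intro sum.cong refl) (simp only: lessThan_iff nth peval_pd_var)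
      then show ?thesis unfolding l sum_Suc2 by (simp add: c_def)
    qed
    also have "\<dots> = 0"
    proof (cases "a \<in> VV n")
      case True
      then show ?thesis using lin[OF True] VV_notZ[OF True] by simp
    next
      case False
      then have "a \<in> Zs n" using a gbasis_VV_Zs by blast
      then obtain i j where aij: "a = Z i j" and ij: "(i, j) \<in> set (zpairs n)"
        by (auto simp: Zs_def zpairs_set)
      then obtain k0 where k0: "k0 < ?L" "zpairs n ! k0 = (i, j)" by (auto simp: in_set_conv_nth)
      have "(\<Sum>k<?L. c (Suc (Suc k)) * (if a = ?zp k then 1 else 0)) = c (Suc (Suc k0))"
        unfolding aij by (rule sum_zp_delta[OF k0])
      then show ?thesis using k0 aij by (simp add: c_def)
    qed
    finally show ?thesis .
  qed
  have "\<exists>k<length ?Fs. c k \<noteq> 0" using c01 by (auto simp: c_def)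
  then show ?thesis unfolding grad_indep_at_def using main by blast
qed


lemma indep_inv:
  assumes n: "2 \<le> n"
  shows "grad_indep_at n (invariants n :: 'a::field_char_0 spoly list) xi0"
  unfolding grad_indep_at_def
proof (rule allI, rule impI)
  let ?Fs = "invariants n :: 'a spoly list"
  let ?L = "length (zpairs n)"
  let ?zp = "\<lambda>k. Z (fst (zpairs n ! k)) (snd (zpairs n ! k))"
  fix c :: "nat \<Rightarrow> 'a"
  assume H: "\<forall>a\<in>gbasis n. (\<Sum>k<length ?Fs. c k * peval xi0 (pd a (?Fs ! k))) = 0"
  have nth: "?Fs ! Suc k = var (?zp k)" if "k < ?L" for k
    using that by (simp add: invariants_def case_prod_beta)
  have S: "(\<Sum>k<length ?Fs. c k * peval xi0 (pd a (?Fs ! k))) =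
      c 0 * peval xi0 (pd a (Cn n :: 'a spoly)) + (\<Sum>k<?L. c (Suc k) * (if a = ?zp k then 1 else 0))" for a
  proof -
    have l: "length ?Fs = Suc ?L" by (simp add: invariants_def)
    have "(\<Sum>k<?L. c (Suc k) * peval xi0 (pd a (?Fs ! Suc k))) =
          (\<Sum>k<?L. c (Suc k) * (if a = ?zp k then 1 else 0))"
      by (intro sum.cong refl) (simp only: lessThan_iff nth peval_pd_var)
    then show ?thesis unfolding l sum_Suc1 by (simp add: invariants_def)
  qed
  have c0: "c 0 = 0"
  proof -
    have "c 0 * peval xi0 (pd Xp (Cn n :: 'a spoly)) + (\<Sum>k<?L. c (Suc k) * (if Xp = ?zp k then 1 else 0)) = 0"
      using H S[of Xp] by simp
    then show ?thesis by (simp add: peval_pd_Xp_Cn[OF n])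
  qed
  have cS: "c (Suc k0) = 0" if k0: "k0 < ?L" for k0
  proof -
    obtain i j where e: "zpairs n ! k0 = (i, j)" by (cases "zpairs n ! k0")
    have "(i, j) \<in> set (zpairs n)" using k0 e by (metis nth_mem)
    then have "Z i j \<in> gbasis n" by (auto simp: zpairs_set intro: gb_Z)
    then have "c 0 * peval xi0 (pd (Z i j) (Cn n :: 'a spoly)) + (\<Sum>k<?L. c (Suc k) * (if Z i j = ?zp k then 1 else 0)) = 0"
      using H S[of "Z i j"] by simp
    then show ?thesis using sum_zp_delta[OF k0 e, of "\<lambda>k. c (Suc k)"] c0 by simp
  qed
  show "\<forall>k<length ?Fs. c k = 0"
  proof (intro allI impI)
    fix k assume "k < length ?Fs"
    then show "c k = 0" using c0 cS by (cases k) (auto simp: invariants_def)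
  qed
qed

lemma maximal:
  assumes n: "2 \<le> n" and C: "casimir n (C :: 'a::field_char_0 spoly)"
  shows "\<not> functionally_independent n (C # invariants n)"
  unfolding functionally_independent_def
proof
  assume "\<exists>\<xi>. grad_indep_at n (C # invariants n) \<xi>"
  then obtain \<xi> where I: "grad_indep_at n (C # invariants n) \<xi>" by blast
  have par: "pd a C * pd b (Cn n) = pd b C * pd a (Cn n :: 'a spoly)" if "a \<in> VV n" "b \<in> VV n" for a b
    by (rule kernel_parallel[OF casimir_ker[OF C] casimir_ker[OF casimir_Cn[OF n]] Dd_nonzero that])
  let ?u = "\<lambda>a. peval \<xi> (pd a C)" and ?w = "\<lambda>a. peval \<xi> (pd a (Cn n :: 'a spoly))"
  have "\<exists>c0 c1. (c0 \<noteq> 0 \<or> c1 \<noteq> 0) \<and> (\<forall>a\<in>VV n. c0 * ?u a + c1 * ?w a = 0)"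
  proof (cases "\<forall>a\<in>VV n. ?w a = 0")
    case True
    then show ?thesis by (intro exI[of _ 0] exI[of _ 1]) auto
  next
    case False
    then obtain b where b: "b \<in> VV n" "?w b \<noteq> 0" by blast
    have "?w b * ?u a + (- ?u b) * ?w a = 0" if a: "a \<in> VV n" for a
    proof -
      have "?u a * ?w b = ?u b * ?w a"
        using arg_cong[OF par[OF a b(1)], of "peval \<xi>"] by (simp add: peval_mult)
      then show ?thesis by (simp add: algebra_simps)
    qed
    then show ?thesis using b by (intro exI[of _ "?w b"] exI[of _ "- ?u b"]) auto
  qed
  then obtain c0 c1 where c: "c0 \<noteq> 0 \<or> c1 \<noteq> 0" "\<And>a. a \<in> VV n \<Longrightarrow> c0 * ?u a + c1 * ?w a = 0" by blast
  have "\<not> grad_indep_at n (C # Cn n # map (\<lambda>(i, j). var (Z i j)) (zpairs n)) \<xi>"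
    by (rule not_indep[OF c])
  then show False using I by (simp add: invariants_def)
qed

theorem theorem4p3:
  fixes n :: nat
  assumes "n \<ge> 2"
  shows "(\<forall>i j. 1 \<le> i \<and> i \<le> j \<and> j \<le> n-2 \<longrightarrow> casimir n (var (Z i j) :: 'a::field_char_0 spoly))
    \<and> casimir n (Cn n :: 'a spoly)
    \<and> Cn n \<noteq> (0 :: 'a spoly)
    \<and> (\<forall>m\<in>Poly_Mapping.keys (Cn n :: 'a spoly). (\<Sum>v\<in>Poly_Mapping.keys m. Poly_Mapping.lookup m v) = n)
    \<and> functionally_independent n (invariants n :: 'a spoly list)
    \<and> (\<forall>C :: 'a spoly. casimir n C \<longrightarrow> \<not> functionally_independent n (C # invariants n))"
proof (intro conjI allI impI ballI)
  fix i j assume "1 \<le> i \<and> i \<le> j \<and> j \<le> n - 2"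
  then show "casimir n (var (Z i j) :: 'a spoly)" by (intro casimir_Z) auto
next
  show "casimir n (Cn n :: 'a spoly)" by (rule casimir_Cn[OF assms])
next
  show "Cn n \<noteq> (0 :: 'a spoly)" by (rule Cn_nonzero[OF assms])
next
  fix m assume "m \<in> Poly_Mapping.keys (Cn n :: 'a spoly)"
  then show "(\<Sum>v\<in>Poly_Mapping.keys m. Poly_Mapping.lookup m v) = n"
    using homd_Cn[of n, where 'a='a] by (simp add: homd_def deg_def)
next
  show "functionally_independent n (invariants n :: 'a spoly list)"
    unfolding functionally_independent_def using indep_inv[OF assms] by blast
next
  fix C :: "'a spoly" assume "casimir n C"
  then show "\<not> functionally_independent n (C # invariants n)" by (rule maximal[OF assms])
qed

end
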